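(* Let $\pi$ be any probability distribution on $[K]^n$ ($K\ge2$), $\xi\in[0,n]$ and $s\in(0,1)$. The Markov kernel $Q_{\mathrm{NR}}$ is $\tilde\pi$-invariant, where $\tilde\pi(c,v)=\pi(c)\,2^{-K(K-1)/2}$ on $[K]^n\times\{-1,+1\}^{\mathcal K}$. Moreover, if $\pi(c)>0$ for every $c\in[K]^n$, then $Q_{\mathrm{NR}}$ is irreducible, aperiodic and uniformly ergodic.
   Context: Notation: $[K]=\{1,\dots,K\}$; $n_k(c)=\#\{i:c_i=k\}$; $(c_{-i},k)$ is $c$ with $c_i$ replaced by $k$; $\pi(c_i=k\mid c_{-i})=\pi((c_{-i},k))/\sum_j\pi((c_{-i},j))$. $\mathcal{K}=\{(k,k')\in[K]^2:k<k'\}$. $r(c,i,k_-,k_+)=\frac{n_{k_-}(c)}{n_{k_+}(c)+1}\cdot\frac{\pi(c_i=k_+\mid c_{-i})}{\pi(c_i=k_-\mid c_{-i})}$. For $(k,k')\in\mathcal K$, $\tilde P_{k,k'}$ is the kernel on $[K]^n\times\{-1,+1\}^{\mathcal K}$ that from $(c,v)$: (1) with probability $\xi/n$ negates $v_{k,k'}$; (2) sets $(k_-,k_+)=(k,k')$ if $v_{k,k'}=+1$, $(k_-,k_+)=(k',k)$ if $v_{k,k'}=-1$; (3) if $n_{k_-}(c)=0$ sets $c'=c$ and $v'=v$ with $v_{k,k'}$ negated; otherwise picks $i$ uniformly from $\{i':c_{i'}=k_-\}$ and with probability $\min\{1,r(c,i,k_-,k_+)\}$ sets $(c',v')=((c_{-i},k_+),v)$,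 else $c'=c$, $v'=v$ with $v_{k,k'}$ negated; (4) with probability $\xi/n$ negates $v'_{k,k'}$. $Q_{\mathrm{NR}}$: from $(c,v)$, sample $(k,k')$ uniformly from $\mathcal K$, sample $t\in\{1,2,\dots\}$ from the geometric distribution with success probability $s/(n_k(c)+n_{k'}(c))$ (i.e. $Q_{\mathrm{NR}}=\sum_{(k,k')\in\mathcal K}\frac{2}{K(K-1)}\sum_{t\ge1}q_{m_c(k,k')}(t)\tilde P_{k,k'}^t$, with $m_c(k,k')=(n_k(c)+n_{k'}(c))/s$ and $q_m$ the geometric pmf with parameter $1/m$; when $n_k(c)+n_{k'}(c)=0$ take $t=1$), and apply $\tilde P^t_{k,k'}$. *)

theory Defs
  imports "HOL-Analysis.Analysis"
begin

type_synonym config = "nat \<Rightarrow> nat"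
type_synonym velo = "nat \<times> nat \<Rightarrow> int"
type_synonym state = "config \<times> velo"

definition kcomp :: "'s set \<Rightarrow> ('s \<Rightarrow> 's \<Rightarrow> real) \<Rightarrow> ('s \<Rightarrow> 's \<Rightarrow> real) \<Rightarrow> 's \<Rightarrow> 's \<Rightarrow> real" where
  "kcomp S P R x y = (\<Sum>z\<in>S. P x z * R z y)"

fun kpow :: "'s set \<Rightarrow> ('s \<Rightarrow> 's \<Rightarrow> real) \<Rightarrow> nat \<Rightarrow> 's \<Rightarrow> 's \<Rightarrow> real" where
  "kpow S P 0 x y = (if x = y then 1 else 0)"
| "kpow S P (Suc t) x y = (\<Sum>z\<in>S. P x z * kpow S P t z y)"

definition invariant_kernel :: "'s set \<Rightarrow> ('s \<Rightarrow> 's \<Rightarrow> real) \<Rightarrow> ('s \<Rightarrow> real) \<Rightarrow> bool" where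
  "invariant_kernel S P \<mu> \<longleftrightarrow> (\<forall>y\<in>S. (\<Sum>x\<in>S. \<mu> x * P x y) = \<mu> y)"

definition irreducible_kernel :: "'s set \<Rightarrow> ('s \<Rightarrow> 's \<Rightarrow> real) \<Rightarrow> bool" where
  "irreducible_kernel S P \<longleftrightarrow> (\<forall>x\<in>S. \<forall>y\<in>S. \<exists>t\<ge>1. kpow S P t x y > 0)"

definition aperiodic_kernel :: "'s set \<Rightarrow> ('s \<Rightarrow> 's \<Rightarrow> real) \<Rightarrow> bool" where
  "aperiodic_kernel S P \<longleftrightarrow> (\<forall>x\<in>S. Gcd {t::nat. t \<ge> 1 \<and> kpow S P t x x > 0} = 1)"

definition tv_dist :: "'s set \<Rightarrow> ('s \<Rightarrow> real) \<Rightarrow> ('s \<Rightarrow> real) \<Rightarrow> real" where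
  "tv_dist S p q = Max ((\<lambda>A. \<bar>(\<Sum>a\<in>A. p a) - (\<Sum>a\<in>A. q a)\<bar>) ` Pow S)"

definition uniformly_ergodic :: "'s set \<Rightarrow> ('s \<Rightarrow> 's \<Rightarrow> real) \<Rightarrow> ('s \<Rightarrow> real) \<Rightarrow> bool" where
  "uniformly_ergodic S P \<mu> \<longleftrightarrow>
     (\<exists>M \<rho>::real. 0 \<le> \<rho> \<and> \<rho> < 1 \<and> (\<forall>x\<in>S. \<forall>t. tv_dist S (kpow S P t x) \<mu> \<le> M * \<rho> ^ t))"

definition configs :: "nat \<Rightarrow> nat \<Rightarrow> config set" where
  "configs K n = {0..<n} \<rightarrow>\<^sub>E {1..K}"

definition pairsK :: "nat \<Rightarrow> (nat \<times> nat) set" where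
  "pairsK K = {(k, k'). 1 \<le> k \<and> k < k' \<and> k' \<le> K}"

definition velos :: "nat \<Rightarrow> velo set" where
  "velos K = pairsK K \<rightarrow>\<^sub>E {-1, 1}"

definition states :: "nat \<Rightarrow> nat \<Rightarrow> state set" where
  "states K n = configs K n \<times> velos K"

definition cnt :: "nat \<Rightarrow> config \<Rightarrow> nat \<Rightarrow> nat" where
  "cnt n c k = card {i. i < n \<and> c i = k}"

definition condp :: "(config \<Rightarrow> real) \<Rightarrow> nat \<Rightarrow> config \<Rightarrow> nat \<Rightarrow> nat \<Rightarrow> real" where
  "condp \<pi> K c i k = \<pi> (c(i := k)) / (\<Sum>j\<in>{1..K}. \<pi> (c(i := j)))"

definition ratio :: "(config \<Rightarrow> real) \<Rightarrow> nat \<Rightarrow> nat \<Rightarrow> config \<Rightarrow> nat \<Rightarrow> nat \<Rightarrow> nat \<Rightarrow> real" where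
  "ratio \<pi> K n c i km kp =
     real (cnt n c km) / (real (cnt n c kp) + 1) * (condp \<pi> K c i kp / condp \<pi> K c i km)"

definition flipv :: "nat \<times> nat \<Rightarrow> velo \<Rightarrow> velo" where
  "flipv p v = v(p := - v p)"

definition flip_kernel :: "real \<Rightarrow> nat \<Rightarrow> nat \<times> nat \<Rightarrow> state \<Rightarrow> state \<Rightarrow> real" where
  "flip_kernel \<xi> n p x y =
     (1 - \<xi> / real n) * (if y = x then 1 else 0)
     + (\<xi> / real n) * (if y = (fst x, flipv p (snd x)) then 1 else 0)"

definition move_kernel :: "(config \<Rightarrow> real) \<Rightarrow> nat \<Rightarrow> nat \<Rightarrow> nat \<times> nat \<Rightarrow> state \<Rightarrow> state \<Rightarrow> real" where
  "move_kernel \<pi> K n p x y =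
     (let c = fst x; v = snd x;
          (km, kp) = (if v p = 1 then (fst p, snd p) else (snd p, fst p));
          rej = (c, flipv p v)
      in if cnt n c km = 0 then (if y = rej then 1 else 0)
         else (\<Sum>i\<in>{i. i < n \<and> c i = km}.
                 (1 / real (cnt n c km)) *
                 (min 1 (ratio \<pi> K n c i km kp) * (if y = (c(i := kp), v) then 1 else 0)
                  + (1 - min 1 (ratio \<pi> K n c i km kp)) * (if y = rej then 1 else 0))))"

definition Ptilde :: "(config \<Rightarrow> real) \<Rightarrow> nat \<Rightarrow> nat \<Rightarrow> real \<Rightarrow> nat \<times> nat \<Rightarrow> state \<Rightarrow> state \<Rightarrow> real" where
  "Ptilde \<pi> K n \<xi> p =
     kcomp (states K n) (kcomp (states K n) (flip_kernel \<xi> n p) (move_kernel \<pi> K n p))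
       (flip_kernel \<xi> n p)"

definition geom_pmf :: "real \<Rightarrow> nat \<Rightarrow> real" where
  "geom_pmf q t = (1 - q) ^ (t - 1) * q"

definition Q_NR :: "(config \<Rightarrow> real) \<Rightarrow> nat \<Rightarrow> nat \<Rightarrow> real \<Rightarrow> real \<Rightarrow> state \<Rightarrow> state \<Rightarrow> real" where
  "Q_NR \<pi> K n \<xi> s x y =
     (\<Sum>p\<in>pairsK K. (2 / (real K * (real K - 1))) *
        (let N = cnt n (fst x) (fst p) + cnt n (fst x) (snd p)
         in if N = 0 then kpow (states K n) (Ptilde \<pi> K n \<xi> p) 1 x y
            else (\<Sum>j. geom_pmf (s / real N) (Suc j) * kpow (states K n) (Ptilde \<pi> K n \<xi> p) (Suc j) x y)))"

definition pi_tilde :: "(config \<Rightarrow> real) \<Rightarrow> nat \<Rightarrow> state \<Rightarrow> real" where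
  "pi_tilde \<pi> K x = \<pi> (fst x) * 2 powr (- (real K * (real K - 1) / 2))"

end

theory Submission
  imports Defs
begin

definition stoch :: "'s set \<Rightarrow> ('s \<Rightarrow> 's \<Rightarrow> real) \<Rightarrow> bool" where
  "stoch S P \<longleftrightarrow> (\<forall>x\<in>S. \<forall>y\<in>S. P x y \<ge> 0) \<and> (\<forall>x\<in>S. (\<Sum>y\<in>S. P x y) = 1)"

lemma sum_delta_l: "finite S \<Longrightarrow> a \<in> S \<Longrightarrow> (\<Sum>z\<in>S. (if a = z then 1 else 0) * f z) = (f a::real)"
proof -
  assume "finite S" "a \<in> S"
  have "(\<Sum>z\<in>S. (if a = z then 1 else 0) * f z) = (\<Sum>z\<in>S. if a = z then f z else 0)" by (rule sum.cong) auto
  then show ?thesis using \<open>a \<in> S\<close> \<open>finite S\<close> by simp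
qed

lemma sum_delta_r: "finite S \<Longrightarrow> a \<in> S \<Longrightarrow> (\<Sum>z\<in>S. f z * (if z = a then 1 else 0)) = (f a::real)"
proof -
  assume "finite S" "a \<in> S"
  have "(\<Sum>z\<in>S. f z * (if z = a then 1 else 0)) = (\<Sum>z\<in>S. if a = z then f z else 0)" by (rule sum.cong) auto
  then show ?thesis using \<open>a \<in> S\<close> \<open>finite S\<close> by simp
qed

lemma kpow_nonneg:
  assumes "\<forall>x\<in>S. \<forall>y\<in>S. P x y \<ge> 0" "x \<in> S" "y \<in> S"
  shows "kpow S P t x y \<ge> 0"
  using assms(2,3) by (induction t arbitrary: x) (auto intro!: sum_nonneg mult_nonneg_nonneg simp: assms(1))

lemma kpow_rowsum:
  assumes "finite S" "stoch S P" "x \<in> S"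
  shows "(\<Sum>y\<in>S. kpow S P t x y) = 1"
  using assms(3)
proof (induction t arbitrary: x)
  case 0
  then show ?case using assms(1) by simp
next
  case (Suc t)
  have "(\<Sum>y\<in>S. kpow S P (Suc t) x y) = (\<Sum>z\<in>S. P x z * (\<Sum>y\<in>S. kpow S P t z y))"
    by (simp add: sum_distrib_left) (rule sum.swap)
  also have "\<dots> = (\<Sum>z\<in>S. P x z)" using Suc by simp
  also have "\<dots> = 1" using assms(2) Suc(2) by (simp add: stoch_def)
  finally show ?case .
qed

lemma kpow_le1:
  assumes "finite S" "stoch S P" "x \<in> S" "y \<in> S"
  shows "kpow S P t x y \<le> 1"
proof -
  have "kpow S P t x y \<le> (\<Sum>y\<in>S. kpow S P t x y)"
    by (rule member_le_sum) (use assms kpow_nonneg[of S P] in \<open>auto simp: stoch_def\<close>)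
  then show ?thesis using kpow_rowsum[OF assms(1-3)] by simp
qed

lemma kpow_add:
  assumes "x \<in> S" and fin: "finite S"
  shows "kpow S P (a + b) x y = (\<Sum>z\<in>S. kpow S P a x z * kpow S P b z y)"
  using assms
proof (induction a arbitrary: x)
  case 0
  then show ?case using fin by (simp add: sum_delta_l)
next
  case (Suc a)
  have "kpow S P (Suc a + b) x y = (\<Sum>w\<in>S. P x w * kpow S P (a + b) w y)" by simp
  also have "\<dots> = (\<Sum>w\<in>S. P x w * (\<Sum>z\<in>S. kpow S P a w z * kpow S P b z y))"
    using Suc by (intro sum.cong) auto
  also have "\<dots> = (\<Sum>z\<in>S. (\<Sum>w\<in>S. P x w * kpow S P a w z) * kpow S P b z y)"
    by (simp add: sum_distrib_left sum_distrib_right mult.assoc) (rule sum.swap)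
  finally show ?case by simp
qed

lemma kpow_1:
  assumes "y \<in> S" "finite S" shows "kpow S P 1 x y = P x y"
  using assms by (simp add: sum_delta_r)

lemma kpow_invariant:
  assumes "invariant_kernel S P \<mu>" "y \<in> S" and fin: "finite S"
  shows "(\<Sum>x\<in>S. \<mu> x * kpow S P t x y) = \<mu> y"
  using assms(2)
proof (induction t arbitrary: y)
  case 0
  then show ?case using fin by (simp add: sum_delta_r)
next
  case (Suc t)
  have "(\<Sum>x\<in>S. \<mu> x * kpow S P (Suc t) x y) = (\<Sum>z\<in>S. (\<Sum>x\<in>S. \<mu> x * P x z) * kpow S P t z y)"
    by (simp add: sum_distrib_left sum_distrib_right mult.assoc) (rule sum.swap)
  also have "\<dots> = (\<Sum>z\<in>S. \<mu> z * kpow S P t z y)"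
    using assms(1) by (intro sum.cong) (auto simp: invariant_kernel_def)
  finally show ?case using Suc by simp
qed

lemma kcomp_stoch:
  assumes "finite S" "stoch S P" "stoch S R"
  shows "stoch S (kcomp S P R)"
  unfolding stoch_def
proof safe
  fix x y assume "x \<in> S" "y \<in> S"
  then show "kcomp S P R x y \<ge> 0" using assms unfolding kcomp_def stoch_def
    by (auto intro!: sum_nonneg)
next
  fix x assume x: "x \<in> S"
  have "(\<Sum>y\<in>S. kcomp S P R x y) = (\<Sum>z\<in>S. P x z * (\<Sum>y\<in>S. R z y))"
    unfolding kcomp_def by (simp add: sum_distrib_left) (rule sum.swap)
  also have "\<dots> = (\<Sum>z\<in>S. P x z)" using assms by (simp add: stoch_def)
  finally show "(\<Sum>y\<in>S. kcomp S P R x y) = 1" using assms x by (simp add: stoch_def)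
qed

lemma kcomp_invariant:
  assumes "invariant_kernel S P \<mu>" "invariant_kernel S R \<mu>"
  shows "invariant_kernel S (kcomp S P R) \<mu>"
  unfolding invariant_kernel_def
proof
  fix y assume y: "y \<in> S"
  have "(\<Sum>x\<in>S. \<mu> x * kcomp S P R x y) = (\<Sum>z\<in>S. (\<Sum>x\<in>S. \<mu> x * P x z) * R z y)"
    unfolding kcomp_def by (simp add: sum_distrib_left sum_distrib_right mult.assoc) (rule sum.swap)
  also have "\<dots> = (\<Sum>z\<in>S. \<mu> z * R z y)"
    using assms(1) by (intro sum.cong) (auto simp: invariant_kernel_def)
  finally show "(\<Sum>x\<in>S. \<mu> x * kcomp S P R x y) = \<mu> y" using assms(2) y by (simp add: invariant_kernel_def)
qed


lemma contract:
  fixes R :: "'s \<Rightarrow> 's \<Rightarrow> real"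
  assumes fin: "finite S" and st: "stoch S R" and eps: "\<forall>x\<in>S. \<forall>y\<in>S. R x y \<ge> \<epsilon>"
    and d0: "(\<Sum>x\<in>S. d x) = 0"
  shows "(\<Sum>y\<in>S. \<bar>\<Sum>x\<in>S. d x * R x y\<bar>) \<le> (1 - real (card S) * \<epsilon>) * (\<Sum>x\<in>S. \<bar>d x\<bar>)"
proof -
  have eq: "(\<Sum>x\<in>S. d x * R x y) = (\<Sum>x\<in>S. d x * (R x y - \<epsilon>))" for y
  proof -
    have "(\<Sum>x\<in>S. d x * (R x y - \<epsilon>)) = (\<Sum>x\<in>S. d x * R x y) - (\<Sum>x\<in>S. d x) * \<epsilon>"
      by (simp add: right_diff_distrib sum_subtractf sum_distrib_right)
    then show ?thesis using d0 by simp
  qed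
  have le: "\<bar>\<Sum>x\<in>S. d x * R x y\<bar> \<le> (\<Sum>x\<in>S. \<bar>d x\<bar> * (R x y - \<epsilon>))" if y: "y \<in> S" for y
  proof -
    have "\<bar>\<Sum>x\<in>S. d x * R x y\<bar> \<le> (\<Sum>x\<in>S. \<bar>d x * (R x y - \<epsilon>)\<bar>)"
      unfolding eq by (rule sum_abs)
    also have "\<dots> = (\<Sum>x\<in>S. \<bar>d x\<bar> * (R x y - \<epsilon>))"
      using eps y by (intro sum.cong) (auto simp: abs_mult)
    finally show ?thesis .
  qed
  have "(\<Sum>y\<in>S. \<bar>\<Sum>x\<in>S. d x * R x y\<bar>) \<le> (\<Sum>y\<in>S. \<Sum>x\<in>S. \<bar>d x\<bar> * (R x y - \<epsilon>))"
    using le by (rule sum_mono)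
  also have "\<dots> = (\<Sum>x\<in>S. \<bar>d x\<bar> * (\<Sum>y\<in>S. R x y - \<epsilon>))"
    by (subst sum.swap) (simp add: sum_distrib_left)
  also have "\<dots> = (\<Sum>x\<in>S. \<bar>d x\<bar> * (1 - real (card S) * \<epsilon>))"
    using st by (intro sum.cong) (auto simp: stoch_def sum_subtractf)
  finally show ?thesis by (simp add: sum_distrib_right mult.commute)
qed

lemma tv_le_l1:
  assumes "finite S"
  shows "tv_dist S p q \<le> (\<Sum>y\<in>S. \<bar>p y - q y\<bar>)"
  unfolding tv_dist_def
proof (subst Max_le_iff)
  show "finite ((\<lambda>A. \<bar>sum p A - sum q A\<bar>) ` Pow S)" using assms by simp
  show "(\<lambda>A. \<bar>sum p A - sum q A\<bar>) ` Pow S \<noteq> {}" by blast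
  show "\<forall>a\<in>(\<lambda>A. \<bar>sum p A - sum q A\<bar>) ` Pow S. a \<le> (\<Sum>y\<in>S. \<bar>p y - q y\<bar>)"
  proof
    fix a assume "a \<in> (\<lambda>A. \<bar>sum p A - sum q A\<bar>) ` Pow S"
    then obtain A where A: "A \<subseteq> S" "a = \<bar>sum p A - sum q A\<bar>" by auto
    have "a = \<bar>\<Sum>y\<in>A. p y - q y\<bar>" using A by (simp add: sum_subtractf)
    also have "\<dots> \<le> (\<Sum>y\<in>A. \<bar>p y - q y\<bar>)" by (rule sum_abs)
    also have "\<dots> \<le> (\<Sum>y\<in>S. \<bar>p y - q y\<bar>)" using A assms by (intro sum_mono2) auto
    finally show "a \<le> (\<Sum>y\<in>S. \<bar>p y - q y\<bar>)" .
  qed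
qed

lemma ergodic_generic:
  assumes fin: "finite S" and st: "stoch S P" and mu0: "\<forall>x\<in>S. \<mu> x \<ge> 0" and mu1: "(\<Sum>x\<in>S. \<mu> x) = 1"
    and inv: "invariant_kernel S P \<mu>" and m1: "m \<ge> 1" and pos: "\<forall>x\<in>S. \<forall>y\<in>S. kpow S P m x y > 0"
  shows "uniformly_ergodic S P \<mu>"
proof -
  have Sne: "S \<noteq> {}" using mu1 by auto
  define \<epsilon> where "\<epsilon> = Min ((\<lambda>(x,y). kpow S P m x y) ` (S \<times> S))"
  have eps_le: "\<forall>x\<in>S. \<forall>y\<in>S. kpow S P m x y \<ge> \<epsilon>"
    unfolding \<epsilon>_def using fin by (auto intro!: Min_le)
  have eps_pos: "\<epsilon> > 0"
    unfolding \<epsilon>_def using fin Sne pos by (subst Min_gr_iff) auto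
  have stm: "stoch S (kpow S P m)"
    using kpow_rowsum[OF fin st] kpow_nonneg[of S P] st by (auto simp: stoch_def)
  define \<theta> where "\<theta> = 1 - real (card S) * \<epsilon>"
  obtain x0 where x0: "x0 \<in> S" using Sne by auto
  have "real (card S) * \<epsilon> = (\<Sum>y\<in>S. \<epsilon>)" by simp
  also have "\<dots> \<le> (\<Sum>y\<in>S. kpow S P m x0 y)" using eps_le x0 by (intro sum_mono) auto
  also have "\<dots> = 1" using kpow_rowsum[OF fin st x0] .
  finally have th0: "\<theta> \<ge> 0" unfolding \<theta>_def by simp
  have "card S > 0" using fin Sne by (simp add: card_gt_0_iff)
  then have th1: "\<theta> < 1" unfolding \<theta>_def using eps_pos by simp
  define \<theta>' where "\<theta>' = max \<theta> (1/2)"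
  have t'0: "\<theta>' > 0" and t'1: "\<theta>' < 1" and tt': "\<theta> \<le> \<theta>'" using th1 unfolding \<theta>'_def by auto
  define \<rho> where "\<rho> = \<theta>' powr (1 / real m)"
  have bound: "tv_dist S (kpow S P t x) \<mu> \<le> (2 / \<theta>') * \<rho> ^ t" if x: "x \<in> S" for x t
  proof -
    define d where "d = (\<lambda>t y. kpow S P t x y - \<mu> y)"
    have dsum: "(\<Sum>y\<in>S. d t y) = 0" for t
      unfolding d_def using kpow_rowsum[OF fin st x] mu1 by (simp add: sum_subtractf)
    have dstep: "d (t + m) y = (\<Sum>z\<in>S. d t z * kpow S P m z y)" if y: "y \<in> S" for t y
    proof -
      have "d (t + m) y = (\<Sum>z\<in>S. kpow S P t x z * kpow S P m z y) - (\<Sum>z\<in>S. \<mu> z * kpow S P m z y)"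
        unfolding d_def using kpow_add[OF x fin] kpow_invariant[OF inv y fin] by simp
      then show ?thesis unfolding d_def by (simp add: sum_subtractf left_diff_distrib)
    qed
    have dle2: "(\<Sum>y\<in>S. \<bar>d t y\<bar>) \<le> 2" for t
    proof -
      have "(\<Sum>y\<in>S. \<bar>d t y\<bar>) \<le> (\<Sum>y\<in>S. kpow S P t x y + \<mu> y)"
        unfolding d_def
      proof (intro sum_mono)
        fix y assume y: "y \<in> S"
        have "kpow S P t x y \<ge> 0" using kpow_nonneg[of S P] st x y by (auto simp: stoch_def)
        moreover have "\<mu> y \<ge> 0" using mu0 y by auto
        ultimately show "\<bar>kpow S P t x y - \<mu> y\<bar> \<le> kpow S P t x y + \<mu> y" by arith
      qed
      also have "\<dots> = 2" using kpow_rowsum[OF fin st x] mu1 by (simp add: sum.distrib)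
      finally show ?thesis .
    qed
    have dq: "(\<Sum>y\<in>S. \<bar>d (r + q * m) y\<bar>) \<le> \<theta> ^ q * 2" for r q
    proof (induction q)
      case 0
      then show ?case using dle2 by simp
    next
      case (Suc q)
      have "(\<Sum>y\<in>S. \<bar>d (r + Suc q * m) y\<bar>) = (\<Sum>y\<in>S. \<bar>\<Sum>z\<in>S. d (r + q * m) z * kpow S P m z y\<bar>)"
        using dstep[of _ "r + q * m"] by (intro sum.cong) (auto simp: algebra_simps)
      also have "\<dots> \<le> \<theta> * (\<Sum>y\<in>S. \<bar>d (r + q * m) y\<bar>)"
        unfolding \<theta>_def by (rule contract[OF fin stm eps_le dsum])
      also have "\<dots> \<le> \<theta> * (\<theta> ^ q * 2)" using Suc th0 by (intro mult_left_mono) auto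
      finally show ?case by simp
    qed
    have "tv_dist S (kpow S P t x) \<mu> \<le> (\<Sum>y\<in>S. \<bar>d t y\<bar>)"
      unfolding d_def by (rule tv_le_l1[OF fin])
    also have "\<dots> \<le> \<theta> ^ (t div m) * 2"
      using dq[of "t mod m" "t div m"] by simp
    also have "\<dots> \<le> \<theta>' ^ (t div m) * 2"
      using th0 tt' by (intro mult_right_mono power_mono) auto
    also have "\<theta>' ^ (t div m) \<le> \<rho> ^ t / \<theta>'"
    proof -
      have "\<rho> ^ t = \<theta>' powr (real t / real m)"
        unfolding \<rho>_def using t'0 by (simp add: powr_realpow[symmetric] powr_powr)
      have r1: "real t / real m - 1 \<le> real (t div m)"
      proof -
        have "t < (t div m + 1) * m" using m1
          by (metis add.commute div_mult_mod_eq mod_less_divisor mult_Suc nat_add_left_cancel_less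
              plus_1_eq_Suc le_less_trans less_numeral_extra(1) not_less)
        then have "real t < (real (t div m) + 1) * real m" by (metis of_nat_1 of_nat_add of_nat_less_iff of_nat_mult)
        then show ?thesis using m1 by (simp add: field_simps)
      qed
      have "\<theta>' ^ (t div m) = \<theta>' powr real (t div m)" using t'0 by (simp add: powr_realpow)
      also have "\<dots> \<le> \<theta>' powr (real t / real m - 1)"
        using t'0 t'1 r1 by (intro powr_mono') auto
      also have "\<dots> = \<theta>' powr (real t / real m) / \<theta>'" using t'0 by (simp add: powr_diff)
      also have "\<dots> = \<rho> ^ t / \<theta>'" using \<open>\<rho> ^ t = _\<close> by simp
      finally show ?thesis .
    qed
    then have "\<theta>' ^ (t div m) * 2 \<le> \<rho> ^ t / \<theta>' * 2" by (rule mult_right_mono) simp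
    finally show ?thesis by (simp add: mult.commute)
  qed
  have "\<rho> \<ge> 0" unfolding \<rho>_def by simp
  have "\<theta>' powr (1 / real m) < 1 powr (1 / real m)"
    using t'0 t'1 m1 by (intro powr_less_mono2) auto
  then have "\<rho> < 1" unfolding \<rho>_def by simp
  note \<open>\<rho> \<ge> 0\<close> this
  then show ?thesis unfolding uniformly_ergodic_def using bound by blast
qed


definition posrel :: "'s set \<Rightarrow> ('s \<Rightarrow> 's \<Rightarrow> real) \<Rightarrow> 's \<Rightarrow> 's \<Rightarrow> bool" where
  "posrel S P x y \<longleftrightarrow> x \<in> S \<and> y \<in> S \<and> P x y > 0"

lemma kpow_ge_mid:
  assumes fin: "finite S" and nn: "\<forall>x\<in>S. \<forall>y\<in>S. P x y \<ge> 0" and x: "x \<in> S" and y: "y \<in> S" and z: "z \<in> S"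
  shows "kpow S P (a + b) x y \<ge> kpow S P a x z * kpow S P b z y"
proof -
  have "kpow S P a x z * kpow S P b z y \<le> (\<Sum>w\<in>S. kpow S P a x w * kpow S P b w y)"
    by (rule member_le_sum) (use z fin x y kpow_nonneg[OF nn] in auto)
  then show ?thesis using kpow_add[OF x fin] by simp
qed

lemma tranclp_kpow:
  assumes fin: "finite S" and nn: "\<forall>x\<in>S. \<forall>y\<in>S. P x y \<ge> 0"
  assumes "(posrel S P)\<^sup>+\<^sup>+ x y"
  shows "\<exists>t\<ge>1. kpow S P t x y > 0 \<and> x \<in> S \<and> y \<in> S"
  using assms(3)
proof (induction rule: tranclp_induct)
  case (base y)
  then show ?case using kpow_1[of y S P x] fin by (auto simp: posrel_def intro!: exI[of _ 1])
next
  case (step y z)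
  then obtain t where t: "t \<ge> 1" "kpow S P t x y > 0" "x \<in> S" "y \<in> S" by auto
  have z: "z \<in> S" "P y z > 0" using step by (auto simp: posrel_def)
  have "kpow S P (t + 1) x z \<ge> kpow S P t x y * kpow S P 1 y z"
    by (rule kpow_ge_mid[OF fin nn]) (use t z in auto)
  moreover have "kpow S P 1 y z = P y z" using kpow_1[OF z(1) fin] .
  moreover have "kpow S P t x y * P y z > 0" using t z by (intro mult_pos_pos) auto
  ultimately have "kpow S P (t + 1) x z > 0" by (metis order.strict_trans2)
  then show ?case using t z by (intro exI[of _ "t+1"]) auto
qed

lemma rtranclp_kpow:
  assumes fin: "finite S" and nn: "\<forall>x\<in>S. \<forall>y\<in>S. P x y \<ge> 0" and x: "x \<in> S"
  assumes "(posrel S P)\<^sup>*\<^sup>* x y"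
  shows "\<exists>t. kpow S P t x y > 0"
proof -
  from assms(4) have "x = y \<or> (posrel S P)\<^sup>+\<^sup>+ x y" by (metis rtranclpD)
  then show ?thesis
  proof
    assume "x = y" then show ?thesis by (intro exI[of _ 0]) simp
  qed (use tranclp_kpow[OF fin nn] in blast)
qed

lemma posm_generic:
  assumes fin: "finite S" and nn: "\<forall>x\<in>S. \<forall>y\<in>S. P x y \<ge> 0"
    and loop: "\<forall>x\<in>S. P x x > 0" and conn: "\<forall>x\<in>S. \<forall>y\<in>S. (posrel S P)\<^sup>*\<^sup>* x y"
  shows "\<exists>m\<ge>1. \<forall>x\<in>S. \<forall>y\<in>S. kpow S P m x y > 0"
proof -
  have mono: "kpow S P (t + d) x y > 0" if "kpow S P t x y > 0" "x \<in> S" "y \<in> S" for t d x y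
  proof (induction d)
    case 0 then show ?case using that by simp
  next
    case (Suc d)
    have "kpow S P (1 + (t + d)) x y \<ge> kpow S P 1 x x * kpow S P (t + d) x y"
      by (rule kpow_ge_mid[OF fin nn]) (use that in auto)
    moreover have "kpow S P 1 x x = P x x" using kpow_1[OF that(2) fin] .
    moreover have "P x x * kpow S P (t + d) x y > 0" using Suc loop that by (intro mult_pos_pos) auto
    ultimately show ?case by simp
  qed
  define T where "T = (\<lambda>(x,y). SOME t. kpow S P t x y > 0)"
  have T: "kpow S P (T (x,y)) x y > 0" if "x \<in> S" "y \<in> S" for x y
    unfolding T_def using rtranclp_kpow[OF fin nn that(1) conn[rule_format, OF that]]
    by (auto intro: someI_ex)
  define m where "m = Max (insert 0 (T ` (S \<times> S))) + 1"
  have "kpow S P m x y > 0" if "x \<in> S" "y \<in> S" for x y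
  proof -
    have "T (x,y) \<le> Max (insert 0 (T ` (S \<times> S)))" using fin that by (intro Max_ge) auto
    then have "m = T (x,y) + (m - T (x,y))" unfolding m_def by simp
    then show ?thesis using mono[OF T[OF that] that, of "m - T (x,y)"] by simp
  qed
  then show ?thesis unfolding m_def by (intro exI[of _ m]) (auto simp: m_def)
qed

lemma aperiodic_irred_generic:
  assumes fin: "finite S" and nn: "\<forall>x\<in>S. \<forall>y\<in>S. P x y \<ge> 0"
    and loop: "\<forall>x\<in>S. P x x > 0" and m: "m \<ge> 1" "\<forall>x\<in>S. \<forall>y\<in>S. kpow S P m x y > 0"
  shows "irreducible_kernel S P \<and> aperiodic_kernel S P"
proof
  show "irreducible_kernel S P" unfolding irreducible_kernel_def using m by blast
  show "aperiodic_kernel S P" unfolding aperiodic_kernel_def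
  proof
    fix x assume x: "x \<in> S"
    have "kpow S P (1 + m) x x \<ge> kpow S P 1 x x * kpow S P m x x"
      by (rule kpow_ge_mid[OF fin nn]) (use x in auto)
    moreover have "kpow S P 1 x x = P x x" using kpow_1[OF x fin] .
    moreover have "P x x * kpow S P m x x > 0" using loop m x by (intro mult_pos_pos) auto
    ultimately have "kpow S P (1 + m) x x > 0" by (metis order.strict_trans2)
    then have in1: "Suc m \<in> {t. t \<ge> 1 \<and> kpow S P t x x > 0}" by simp
    have in2: "m \<in> {t. t \<ge> 1 \<and> kpow S P t x x > 0}" using m x by simp
    have "Gcd {t. t \<ge> 1 \<and> kpow S P t x x > 0} dvd Suc m" "Gcd {t. t \<ge> 1 \<and> kpow S P t x x > 0} dvd m"
      using in1 in2 by (auto intro: Gcd_dvd)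
    then have "Gcd {t. t \<ge> 1 \<and> kpow S P t x x > 0} dvd Suc m - m" by (intro dvd_diff_nat)
    then have "Gcd {t. t \<ge> 1 \<and> kpow S P t x x > 0} dvd 1" by simp
    then show "Gcd {t. t \<ge> 1 \<and> kpow S P t x x > 0} = 1" by simp
  qed
qed


lemma pairsK_mem: "p \<in> pairsK K \<Longrightarrow> 1 \<le> fst p \<and> fst p < snd p \<and> snd p \<le> K"
  by (auto simp: pairsK_def)

lemma finite_pairsK: "finite (pairsK K)"
proof -
  have "pairsK K \<subseteq> {1..K} \<times> {1..K}" by (auto simp: pairsK_def)
  then show ?thesis by (rule finite_subset) simp
qed

lemma pairsK_Suc: "pairsK (Suc K) = pairsK K \<union> (\<lambda>k. (k, Suc K)) ` {1..K}"
  by (auto simp: pairsK_def)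

lemma card_pairsK: "card (pairsK K) * 2 = K * (K - 1)"
proof (induction K)
  case 0
  have "pairsK 0 = {}" by (auto simp: pairsK_def)
  then show ?case by simp
next
  case (Suc K)
  have disj: "pairsK K \<inter> (\<lambda>k. (k, Suc K)) ` {1..K} = {}" by (auto simp: pairsK_def)
  have "card (pairsK (Suc K)) = card (pairsK K) + K"
    unfolding pairsK_Suc using disj finite_pairsK
    by (subst card_Un_disjoint) (auto simp: card_image inj_on_def)
  then show ?case using Suc by (cases K) (auto simp: algebra_simps)
qed

lemma finite_configs: "finite (configs K n)"
  unfolding configs_def by (intro finite_PiE) auto

lemma finite_velos: "finite (velos K)"
  unfolding velos_def by (intro finite_PiE finite_pairsK) auto

lemma finite_states: "finite (states K n)"
  unfolding states_def using finite_configs finite_velos by simp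

lemma card_velos: "card (velos K) = 2 ^ card (pairsK K)"
  unfolding velos_def by (simp add: card_PiE finite_pairsK numeral_2_eq_2)

lemma configs_upd: "c \<in> configs K n \<Longrightarrow> i < n \<Longrightarrow> k \<in> {1..K} \<Longrightarrow> c(i := k) \<in> configs K n"
  unfolding configs_def by (auto simp: PiE_def extensional_def)

lemma configs_val: "c \<in> configs K n \<Longrightarrow> i < n \<Longrightarrow> c i \<in> {1..K}"
  unfolding configs_def by auto

lemma flipv_velos: "p \<in> pairsK K \<Longrightarrow> v \<in> velos K \<Longrightarrow> flipv p v \<in> velos K"
  unfolding velos_def flipv_def by (auto simp: PiE_def extensional_def Pi_def)

lemma flipv_flipv[simp]: "flipv p (flipv p v) = v"
  unfolding flipv_def by auto

lemma flipv_at[simp]: "flipv p v p = - v p"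
  unfolding flipv_def by auto

lemma velos_val: "v \<in> velos K \<Longrightarrow> p \<in> pairsK K \<Longrightarrow> v p = 1 \<or> v p = -1"
  unfolding velos_def by auto

lemma flipv_inj: "flipv p v = flipv p w \<Longrightarrow> v = w"
  by (metis flipv_flipv)

lemma finite_idx: "finite {i. i < (n::nat) \<and> P i}"
  by (rule finite_subset[of _ "{..<n}"]) auto

lemma cnt_upd:
  assumes "j < n" "c j = a" "a \<noteq> b"
  shows "cnt n (c(j := b)) a + 1 = cnt n c a" "cnt n (c(j := b)) b = cnt n c b + 1"
    "k \<noteq> a \<Longrightarrow> k \<noteq> b \<Longrightarrow> cnt n (c(j := b)) k = cnt n c k"
proof -
  have "{i. i < n \<and> (c(j := b)) i = a} = {i. i < n \<and> c i = a} - {j}" using assms by auto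
  moreover have "j \<in> {i. i < n \<and> c i = a}" using assms by auto
  ultimately show "cnt n (c(j := b)) a + 1 = cnt n c a" unfolding cnt_def
  proof -
    assume e: "{i. i < n \<and> (c(j := b)) i = a} = {i. i < n \<and> c i = a} - {j}"
      and j: "j \<in> {i. i < n \<and> c i = a}"
    have "card ({i. i < n \<and> c i = a} - {j}) = card {i. i < n \<and> c i = a} - 1"
      using j by (intro card_Diff_singleton) 
    moreover have "card {i. i < n \<and> c i = a} > 0" using j finite_idx[of n] by (subst card_gt_0_iff) auto
    ultimately show "card {i. i < n \<and> (c(j := b)) i = a} + 1 = card {i. i < n \<and> c i = a}"
      unfolding e by simp
  qed
  have "{i. i < n \<and> (c(j := b)) i = b} = insert j {i. i < n \<and> c i = b}" using assms by auto
  moreover have "j \<notin> {i. i < n \<and> c i = b}" using assms by auto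
  ultimately show "cnt n (c(j := b)) b = cnt n c b + 1" unfolding cnt_def by simp
  assume "k \<noteq> a" "k \<noteq> b"
  then have "{i. i < n \<and> (c(j := b)) i = k} = {i. i < n \<and> c i = k}" using assms by auto
  then show "cnt n (c(j := b)) k = cnt n c k" unfolding cnt_def by simp
qed

lemma cnt_pos: "j < n \<Longrightarrow> c j = a \<Longrightarrow> cnt n c a > 0"
  unfolding cnt_def using finite_idx[of n "\<lambda>i. c i = a"] by (subst card_gt_0_iff) auto

lemma cnt_zero: "cnt n c a = 0 \<Longrightarrow> j < n \<Longrightarrow> c j \<noteq> a"
  using cnt_pos[of j n c a] by auto


definition kmv :: "nat \<times> nat \<Rightarrow> velo \<Rightarrow> nat" where
  "kmv p v = (if v p = 1 then fst p else snd p)"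
definition kpv :: "nat \<times> nat \<Rightarrow> velo \<Rightarrow> nat" where
  "kpv p v = (if v p = 1 then snd p else fst p)"

lemma M_eq: "move_kernel \<pi> K n p (c,v) y =
  (if cnt n c (kmv p v) = 0 then (if y = (c, flipv p v) then 1 else 0)
   else (\<Sum>i\<in>{i. i < n \<and> c i = kmv p v}. (1 / real (cnt n c (kmv p v))) *
      (min 1 (ratio \<pi> K n c i (kmv p v) (kpv p v)) * (if y = (c(i := kpv p v), v) then 1 else 0)
       + (1 - min 1 (ratio \<pi> K n c i (kmv p v) (kpv p v))) * (if y = (c, flipv p v) then 1 else 0))))"
  by (cases "v p = 1"; cases p) (simp_all add: move_kernel_def kmv_def kpv_def Let_def)

lemma kmkp:
  assumes "p \<in> pairsK K" "v \<in> velos K"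
  shows "kmv p v \<in> {fst p, snd p}" "kpv p v \<in> {fst p, snd p}" "kmv p v \<noteq> kpv p v"
    "kmv p (flipv p v) = kpv p v" "kpv p (flipv p v) = kmv p v"
    "kmv p v \<in> {1..K}" "kpv p v \<in> {1..K}"
  using pairsK_mem[OF assms(1)] velos_val[OF assms(2,1)]
  by (auto simp: kmv_def kpv_def)

lemma states_iff: "(c, v) \<in> states K n \<longleftrightarrow> c \<in> configs K n \<and> v \<in> velos K"
  by (simp add: states_def)

lemma upd_eq_idx: "c(j := b) = c(i := b) \<Longrightarrow> c j \<noteq> b \<Longrightarrow> i = j"
  by (metis fun_upd_apply)

lemma min_ratio_sym:
  fixes a b N N' :: real
  assumes "a \<ge> 0" "b \<ge> 0" "N > 0" "N' > 0"
  shows "a * (min 1 (N / N' * (b / a)) / N) = b * (min 1 (N' / N * (a / b)) / N')"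
proof -
  have l: "a * (min 1 (N / N' * (b / a)) / N) = min (a / N) (b / N')"
  proof (cases "a = 0")
    case True then show ?thesis using assms by simp
  next
    case False
    then have "a * (min 1 (N / N' * (b / a)) / N) = min (a / N) (a * (N / N' * (b / a)) / N)"
      using assms by (simp add: min_mult_distrib_left min_divide_distrib_right)
    also have "a * (N / N' * (b / a)) / N = b / N'" using False assms by (simp add: field_simps)
    finally show ?thesis .
  qed
  have r: "b * (min 1 (N' / N * (a / b)) / N') = min (b / N') (a / N)"
  proof (cases "b = 0")
    case True then show ?thesis using assms by simp
  next
    case False
    then have "b * (min 1 (N' / N * (a / b)) / N') = min (b / N') (b * (N' / N * (a / b)) / N')"
      using assms by (simp add: min_mult_distrib_left min_divide_distrib_right)
    also have "b * (N' / N * (a / b)) / N' = a / N" using False assms by (simp add: field_simps)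
    finally show ?thesis .
  qed
  show ?thesis using l r by (simp add: min.commute)
qed

lemma sum_two_delta:
  assumes "finite S" "A \<in> S" "B \<in> S"
  shows "(\<Sum>y\<in>S. r * (a * (if y = A then 1 else 0) + b * (if y = B then 1 else 0))) = r * (a + b::real)"
proof -
  have "(\<Sum>y\<in>S. r * (a * (if y = A then 1 else 0) + b * (if y = B then 1 else 0)))
      = (\<Sum>y\<in>S. (if y = A then r * a else 0) + (if y = B then r * b else 0))"
    by (rule sum.cong) (auto simp: algebra_simps)
  also have "\<dots> = r * a + r * b" using assms by (simp add: sum.distrib)
  finally show ?thesis by (simp add: algebra_simps)
qed

lemma div_div_cancel: "(Z = 0 \<Longrightarrow> y = 0) \<Longrightarrow> ((x::real) / Z) / (y / Z) = x / y"
  by (cases "Z = 0") auto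

locale nr =
  fixes \<pi> :: "config \<Rightarrow> real" and K n :: nat and \<xi> s :: real
  assumes K2: "K \<ge> 2" and n1: "n \<ge> 1"
    and pi_nn: "\<forall>c\<in>configs K n. \<pi> c \<ge> 0" and pi_sum: "(\<Sum>c\<in>configs K n. \<pi> c) = 1"
    and xi0: "0 \<le> \<xi>" and xin: "\<xi> \<le> real n" and s0: "0 < s" and s1: "s < 1"
begin

abbreviation "S \<equiv> states K n"
abbreviation "M p \<equiv> move_kernel \<pi> K n p"
abbreviation "\<mu> \<equiv> pi_tilde \<pi> K"
abbreviation "alpha p c v i \<equiv> min 1 (ratio \<pi> K n c i (kmv p v) (kpv p v))"

lemma Z_props:
  assumes c: "c \<in> configs K n" and i: "i < n" and k: "k \<in> {1..K}"
  shows "(\<Sum>j\<in>{1..K}. \<pi> (c(i := j))) \<ge> \<pi> (c(i := k))" "\<pi> (c(i := k)) \<ge> 0"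
proof -
  show "\<pi> (c(i := k)) \<ge> 0" using pi_nn configs_upd[OF c i k] by auto
  show "(\<Sum>j\<in>{1..K}. \<pi> (c(i := j))) \<ge> \<pi> (c(i := k))"
    by (rule member_le_sum) (use k pi_nn configs_upd[OF c i] in auto)
qed

lemma condp_nn: "c \<in> configs K n \<Longrightarrow> i < n \<Longrightarrow> k \<in> {1..K} \<Longrightarrow> condp \<pi> K c i k \<ge> 0"
  unfolding condp_def using Z_props[of c i k] by (auto intro!: divide_nonneg_nonneg)

lemma ratio_nn: "c \<in> configs K n \<Longrightarrow> i < n \<Longrightarrow> k1 \<in> {1..K} \<Longrightarrow> k2 \<in> {1..K} \<Longrightarrow> ratio \<pi> K n c i k1 k2 \<ge> 0"
  unfolding ratio_def using condp_nn[of c i k1] condp_nn[of c i k2]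
  by (auto intro!: mult_nonneg_nonneg divide_nonneg_nonneg)

lemma alpha_bounds:
  assumes "p \<in> pairsK K" "(c, v) \<in> S" "i < n"
  shows "alpha p c v i \<ge> 0" "alpha p c v i \<le> 1"
  using ratio_nn[of c i "kmv p v" "kpv p v"] kmkp[OF assms(1)] assms by (auto simp: states_iff)

lemma M_nonneg:
  assumes p: "p \<in> pairsK K" and x: "(c, v) \<in> S"
  shows "M p (c, v) y \<ge> 0"
  unfolding M_eq using alpha_bounds[OF p x]
  by (auto intro!: sum_nonneg mult_nonneg_nonneg add_nonneg_nonneg)

lemma M_rowsum:
  assumes p: "p \<in> pairsK K" and x: "(c, v) \<in> S"
  shows "(\<Sum>y\<in>S. M p (c, v) y) = 1"
proof -
  have rej: "(c, flipv p v) \<in> S" using x flipv_velos[OF p] by (auto simp: states_iff)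
  have acc: "(c(i := kpv p v), v) \<in> S" if "i < n" for i
    using x configs_upd that kmkp[OF p] by (auto simp: states_iff)
  show ?thesis
  proof (cases "cnt n c (kmv p v) = 0")
    case True
    then show ?thesis unfolding M_eq using rej finite_states by simp
  next
    case False
    define N where "N = cnt n c (kmv p v)"
    have "(\<Sum>y\<in>S. M p (c, v) y) = (\<Sum>i\<in>{i. i < n \<and> c i = kmv p v}. \<Sum>y\<in>S. (1 / real N) *
      (alpha p c v i * (if y = (c(i := kpv p v), v) then 1 else 0)
       + (1 - alpha p c v i) * (if y = (c, flipv p v) then 1 else 0)))"
      unfolding M_eq N_def using False by (simp add: sum.swap[of _ S])
    also have "\<dots> = (\<Sum>i\<in>{i. i < n \<and> c i = kmv p v}. (1 / real N))"
    proof (intro sum.cong refl)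
      fix i assume "i \<in> {i. i < n \<and> c i = kmv p v}"
      then have i: "(c(i := kpv p v), v) \<in> S" using acc by auto
      show "(\<Sum>y\<in>S. (1 / real N) *
        (alpha p c v i * (if y = (c(i := kpv p v), v) then 1 else 0)
        + (1 - alpha p c v i) * (if y = (c, flipv p v) then 1 else 0))) = 1 / real N"
        using sum_two_delta[OF finite_states i rej, of "1 / real N" "alpha p c v i" "1 - alpha p c v i"]
        by (simp only:) simp
    qed
    also have "\<dots> = 1" using False by (simp add: N_def cnt_def)
    finally show ?thesis .
  qed
qed

end

context nr begin

lemma M_support:
  assumes "M p (c, v) y \<noteq> 0"
  shows "y = (c, flipv p v) \<or> (\<exists>j<n. c j = kmv p v \<and> y = (c(j := kpv p v), v))"
proof (cases "cnt n c (kmv p v) = 0")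
  case True
  then show ?thesis using assms unfolding M_eq by (auto split: if_splits)
next
  case False
  then have "(\<Sum>i\<in>{i. i < n \<and> c i = kmv p v}. (1 / real (cnt n c (kmv p v))) *
      (alpha p c v i * (if y = (c(i := kpv p v), v) then 1 else 0)
       + (1 - alpha p c v i) * (if y = (c, flipv p v) then 1 else 0))) \<noteq> 0"
    using assms unfolding M_eq by simp
  then obtain i where "i \<in> {i. i < n \<and> c i = kmv p v}"
    "(1 / real (cnt n c (kmv p v))) *
      (alpha p c v i * (if y = (c(i := kpv p v), v) then 1 else 0)
       + (1 - alpha p c v i) * (if y = (c, flipv p v) then 1 else 0)) \<noteq> 0"
    by (meson sum.not_neutral_contains_not_neutral)
  then show ?thesis by (auto split: if_splits)
qed

lemma M_acc:
  assumes p: "p \<in> pairsK K" and v: "v \<in> velos K" and j: "j < n" "c j = kmv p v"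
  shows "M p (c, v) (c(j := kpv p v), v) = alpha p c v j / real (cnt n c (kmv p v))"
proof -
  have ne: "kmv p v \<noteq> kpv p v" using kmkp[OF p v] by simp
  have N: "cnt n c (kmv p v) \<noteq> 0" using cnt_pos[of j n c "kmv p v"] j by simp
  have neq: "c(j := kpv p v) \<noteq> c" using j ne by (metis fun_upd_same)
  have "M p (c, v) (c(j := kpv p v), v) = (\<Sum>i\<in>{i. i < n \<and> c i = kmv p v}.
     (if i = j then alpha p c v j / real (cnt n c (kmv p v)) else 0))"
    unfolding M_eq using N
  proof (simp only: if_False, intro sum.cong refl)
    fix i assume i: "i \<in> {i. i < n \<and> c i = kmv p v}"
    have "(c(j := kpv p v) = c(i := kpv p v)) = (i = j)"
      using upd_eq_idx[of c j "kpv p v" i] i j ne by auto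
    then show "1 / real (cnt n c (kmv p v)) *
         (alpha p c v i * (if (c(j := kpv p v), v) = (c(i := kpv p v), v) then 1 else 0) +
          (1 - alpha p c v i) * (if (c(j := kpv p v), v) = (c, flipv p v) then 1 else 0)) =
         (if i = j then alpha p c v j / real (cnt n c (kmv p v)) else 0)"
      using neq by auto
  qed
  also have "\<dots> = alpha p c v j / real (cnt n c (kmv p v))"
    using j finite_idx[of n] by simp
  finally show ?thesis .
qed

lemma M_skew:
  assumes p: "p \<in> pairsK K" and x: "(c, v) \<in> S" and y: "(c', v') \<in> S"
  shows "\<pi> c * M p (c, v) (c', v') = \<pi> c' * M p (c', flipv p v') (c, flipv p v)"
proof -
  have cc: "c \<in> configs K n" and vv: "v \<in> velos K" using x by (auto simp: states_iff)
  have cc': "c' \<in> configs K n" and vv': "v' \<in> velos K" using y by (auto simp: states_iff)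
  consider (rej) "(c', v') = (c, flipv p v)"
    | (acc) j where "j < n" "c j = kmv p v" "(c', v') = (c(j := kpv p v), v)"
    | (none) "(c', v') \<noteq> (c, flipv p v)" "\<not> (\<exists>j<n. c j = kmv p v \<and> (c', v') = (c(j := kpv p v), v))"
    by blast
  then show ?thesis
  proof cases
    case rej
    then show ?thesis by simp
  next
    case acc
    then have c': "c' = c(j := kpv p v)" and v': "v' = v" by auto
    define km where "km = kmv p v"
    define kp where "kp = kpv p v"
    have c'': "c' = c(j := kp)" using c' kp_def by simp
    have ne: "km \<noteq> kp" unfolding km_def kp_def using kmkp[OF p vv] by simp
    have kmK: "km \<in> {1..K}" and kpK: "kp \<in> {1..K}" unfolding km_def kp_def using kmkp[OF p vv] by auto
    have fv: "flipv p v \<in> velos K" using flipv_velos[OF p vv] .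
    have km': "kmv p (flipv p v) = kp" and kp': "kpv p (flipv p v) = km"
      unfolding km_def kp_def using kmkp[OF p vv] by auto
    have cj': "c' j = kmv p (flipv p v)" using c' km' kp_def by simp
    have bk: "c'(j := kpv p (flipv p v)) = c" using c' kp' acc(2) km_def by auto
    have L: "M p (c, v) (c', v') = alpha p c v j / real (cnt n c km)"
      using M_acc[of p v j c, OF p vv acc(1,2)] c' v' km_def by simp
    have R: "M p (c', flipv p v') (c, flipv p v) = alpha p c' (flipv p v) j / real (cnt n c' kp)"
      using M_acc[of p "flipv p v" j c', OF p fv acc(1) cj'] v' bk km' by simp
    have cu1: "cnt n c' km + 1 = cnt n c km" and cu2: "cnt n c' kp = cnt n c kp + 1"
      using cnt_upd[OF acc(1) _ ne, of c] acc(2) c' km_def kp_def by auto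
    define Z where "Z = (\<Sum>l\<in>{1..K}. \<pi> (c(j := l)))"
    have Z': "(\<Sum>l\<in>{1..K}. \<pi> (c'(j := l))) = Z" unfolding Z_def c'' by simp
    have cj: "c(j := km) = c" using acc(2) km_def by auto
    have c'j: "c'(j := kp) = c'" using c' kp_def by simp
    have c'km: "c'(j := km) = c" using c'' cj by simp
    have pc: "\<pi> c \<ge> 0" "\<pi> c' \<ge> 0" using pi_nn cc cc' by auto
    have Zc: "Z \<ge> \<pi> c" "Z \<ge> \<pi> c'"
      using Z_props[OF cc acc(1) kmK] Z_props[OF cc acc(1) kpK] cj c'' unfolding Z_def by auto
    have Z0: "Z = 0 \<Longrightarrow> \<pi> c = 0" "Z = 0 \<Longrightarrow> \<pi> c' = 0" using Zc pc by auto
    have cp1: "condp \<pi> K c j kp = \<pi> c' / Z" unfolding condp_def Z_def c'' by simp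
    have cp2: "condp \<pi> K c j km = \<pi> c / Z" unfolding condp_def Z_def using cj by simp
    have cp3: "condp \<pi> K c' j km = \<pi> c / Z" unfolding condp_def using Z' c'km by simp
    have cp4: "condp \<pi> K c' j kp = \<pi> c' / Z" unfolding condp_def using Z' c'j by simp
    have n1: "real (cnt n c kp) + 1 = real (cnt n c' kp)" using cu2 by simp
    have n2: "real (cnt n c' km) + 1 = real (cnt n c km)" using cu1 by (metis of_nat_1 of_nat_add)
    have r1: "ratio \<pi> K n c j km kp = real (cnt n c km) / real (cnt n c' kp) * (\<pi> c' / \<pi> c)"
    proof -
      have dd: "\<pi> c' / Z / (\<pi> c / Z) = \<pi> c' / \<pi> c" using Z0(1) by (rule div_div_cancel)
      show ?thesis unfolding ratio_def cp1 cp2 n1 dd ..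
    qed
    have r2: "ratio \<pi> K n c' j kp km = real (cnt n c' kp) / real (cnt n c km) * (\<pi> c / \<pi> c')"
    proof -
      have dd: "\<pi> c / Z / (\<pi> c' / Z) = \<pi> c / \<pi> c'" using Z0(2) by (rule div_div_cancel)
      show ?thesis unfolding ratio_def cp3 cp4 n2 dd ..
    qed
    have Npos: "real (cnt n c km) > 0" using cnt_pos[of j n c km] acc(1,2) km_def by simp
    have N'pos: "real (cnt n c' kp) > 0" using cu2 by simp
    have "\<pi> c * (alpha p c v j / real (cnt n c km)) = \<pi> c' * (alpha p c' (flipv p v) j / real (cnt n c' kp))"
      using min_ratio_sym[OF pc Npos N'pos] r1 r2 km' kp'
      by (simp add: km_def[symmetric] kp_def[symmetric])
    then show ?thesis using L R by simp
  next
    case none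
    have L: "M p (c, v) (c', v') = 0" using M_support[of p c v "(c', v')"] none by blast
    have "M p (c', flipv p v') (c, flipv p v) = 0"
    proof (rule ccontr)
      assume "M p (c', flipv p v') (c, flipv p v) \<noteq> 0"
      from M_support[OF this] show False
      proof
        assume "(c, flipv p v) = (c', flipv p (flipv p v'))"
        then show False using none by auto
      next
        assume "\<exists>j<n. c' j = kmv p (flipv p v') \<and> (c, flipv p v) = (c'(j := kpv p (flipv p v')), flipv p v')"
        then obtain j where j: "j < n" "c' j = kmv p (flipv p v')" "c = c'(j := kpv p (flipv p v'))"
          "flipv p v = flipv p v'" by auto
        have vv'': "v = v'" using j(4) flipv_inj by blast
        have "c' j = kpv p v" "c j = kmv p v" using j kmkp[OF p vv] vv'' by auto
        then have "c' = c(j := kpv p v)" using j(3) by (auto simp: fun_eq_iff)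
        then show False using none j(1) \<open>c j = kmv p v\<close> vv'' by auto
      qed
    qed
    then show ?thesis using L by simp
  qed
qed

end

definition Fs :: "nat \<times> nat \<Rightarrow> state \<Rightarrow> state" where
  "Fs p x = (fst x, flipv p (snd x))"

lemma Fs_Fs[simp]: "Fs p (Fs p x) = x" by (simp add: Fs_def)

lemma Fs_S: "p \<in> pairsK K \<Longrightarrow> x \<in> states K n \<Longrightarrow> Fs p x \<in> states K n"
  by (cases x) (auto simp: Fs_def states_iff flipv_velos)

lemma sum_Fs:
  assumes "p \<in> pairsK K"
  shows "(\<Sum>x\<in>states K n. g (Fs p x)) = (\<Sum>z\<in>states K n. g z)"
  by (rule sum.reindex_bij_witness[of _ "Fs p" "Fs p"]) (auto simp: Fs_S[OF assms])

lemma sum_two_delta_l: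
  assumes "finite S" "A \<in> S" "B \<in> S"
  shows "(\<Sum>x\<in>S. f x * (a * (if x = A then 1 else 0) + b * (if x = B then 1 else 0))) = f A * a + f B * (b::real)"
proof -
  have "(\<Sum>x\<in>S. f x * (a * (if x = A then 1 else 0) + b * (if x = B then 1 else 0)))
      = (\<Sum>x\<in>S. (if x = A then f A * a else 0) + (if x = B then f B * b else 0))"
    by (rule sum.cong) (auto simp: algebra_simps)
  also have "\<dots> = f A * a + f B * b" using assms by (simp add: sum.distrib)
  finally show ?thesis .
qed

lemma kpow_pres:
  assumes fin: "finite S" and pres: "\<And>x y. x \<in> S \<Longrightarrow> y \<in> S \<Longrightarrow> P x y \<noteq> 0 \<Longrightarrow> f x = f y"
    and x: "x \<in> S" and y: "y \<in> S" and nz: "kpow S P t x y \<noteq> 0"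
  shows "f x = f y"
  using x nz
proof (induction t arbitrary: x)
  case 0
  then show ?case by (simp split: if_splits)
next
  case (Suc t)
  then have "(\<Sum>z\<in>S. P x z * kpow S P t z y) \<noteq> 0" by simp
  then obtain z where z: "z \<in> S" "P x z * kpow S P t z y \<noteq> 0"
    by (meson sum.not_neutral_contains_not_neutral)
  then show ?case using Suc pres[of x z] by auto
qed

context nr begin

abbreviation "Phi p \<equiv> flip_kernel \<xi> n p"
abbreviation "PT p \<equiv> Ptilde \<pi> K n \<xi> p"
abbreviation "ab \<equiv> \<xi> / real n"

definition Np :: "nat \<times> nat \<Rightarrow> config \<Rightarrow> nat" where
  "Np p c = cnt n c (fst p) + cnt n c (snd p)"

lemma ab_bounds: "0 \<le> ab" "ab \<le> 1"
  using xi0 xin n1 by (auto simp: divide_simps)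

lemma mu_eq: "\<mu> (c, v) = \<pi> c * 2 powr (- (real K * (real K - 1) / 2))"
  by (simp add: pi_tilde_def)

lemma mu_Fs: "\<mu> (Fs p x) = \<mu> x" by (simp add: pi_tilde_def Fs_def)

lemma M_stoch: "p \<in> pairsK K \<Longrightarrow> stoch S (M p)"
  unfolding stoch_def
proof safe
  fix x y assume "p \<in> pairsK K" "x \<in> S"
  then show "M p x y \<ge> 0" using M_nonneg by (cases x) auto
next
  fix x assume "p \<in> pairsK K" "x \<in> S"
  then show "(\<Sum>y\<in>S. M p x y) = 1" using M_rowsum by (cases x) auto
qed

lemma M_inv:
  assumes p: "p \<in> pairsK K"
  shows "invariant_kernel S (M p) \<mu>"
  unfolding invariant_kernel_def
proof
  fix y assume y: "y \<in> S"
  have "(\<Sum>x\<in>S. \<mu> x * M p x y) = (\<Sum>x\<in>S. \<mu> y * M p (Fs p y) (Fs p x))"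
  proof (intro sum.cong refl)
    fix x assume x: "x \<in> S"
    obtain c v where xc: "x = (c, v)" by (cases x)
    obtain c' v' where yc: "y = (c', v')" by (cases y)
    show "\<mu> x * M p x y = \<mu> y * M p (Fs p y) (Fs p x)"
      using M_skew[OF p, of c v c' v'] x y unfolding xc yc mu_eq Fs_def
      by (simp add: algebra_simps)
  qed
  also have "\<dots> = \<mu> y * (\<Sum>z\<in>S. M p (Fs p y) z)"
    by (simp add: sum_distrib_left[symmetric] sum_Fs[OF p, of "M p (Fs p y)"])
  also have "\<dots> = \<mu> y"
  proof -
    obtain c v where "Fs p y = (c, v)" by (cases "Fs p y")
    then show ?thesis using M_rowsum[OF p, of c v] Fs_S[OF p y] by simp
  qed
  finally show "(\<Sum>x\<in>S. \<mu> x * M p x y) = \<mu> y" .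
qed

lemma Phi_eq: "Phi p x y = (1 - ab) * (if y = x then 1 else 0) + ab * (if y = Fs p x then 1 else 0)"
  by (simp add: flip_kernel_def Fs_def)

lemma Phi_stoch: "p \<in> pairsK K \<Longrightarrow> stoch S (Phi p)"
  unfolding stoch_def
proof safe
  fix x y assume "x \<in> S" "y \<in> S"
  show "Phi p x y \<ge> 0" unfolding Phi_eq using ab_bounds by auto
next
  fix x assume p: "p \<in> pairsK K" and x: "x \<in> S"
  show "(\<Sum>y\<in>S. Phi p x y) = 1" unfolding Phi_eq
    using sum_two_delta[OF finite_states x Fs_S[OF p x], of 1 "1 - ab" ab] by simp
qed

lemma Phi_inv:
  assumes p: "p \<in> pairsK K"
  shows "invariant_kernel S (Phi p) \<mu>"
  unfolding invariant_kernel_def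
proof
  fix y assume y: "y \<in> S"
  have "(\<Sum>x\<in>S. \<mu> x * Phi p x y) = (\<Sum>x\<in>S. \<mu> x * ((1 - ab) * (if x = y then 1 else 0) + ab * (if x = Fs p y then 1 else 0)))"
    unfolding Phi_eq
  proof (intro sum.cong refl)
    fix x
    have e: "(y = Fs p x) = (x = Fs p y)" by (metis Fs_Fs)
    show "\<mu> x * ((1 - ab) * (if y = x then 1 else 0) + ab * (if y = Fs p x then 1 else 0)) =
      \<mu> x * ((1 - ab) * (if x = y then 1 else 0) + ab * (if x = Fs p y then 1 else 0))"
      unfolding e by (simp add: eq_commute[of y x])
  qed
  also have "\<dots> = \<mu> y * (1 - ab) + \<mu> (Fs p y) * ab"
    by (rule sum_two_delta_l[OF finite_states y Fs_S[OF p y]])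
  also have "\<dots> = \<mu> y" by (simp add: mu_Fs algebra_simps)
  finally show "(\<Sum>x\<in>S. \<mu> x * Phi p x y) = \<mu> y" .
qed

lemma PT_stoch: "p \<in> pairsK K \<Longrightarrow> stoch S (PT p)"
  unfolding Ptilde_def by (intro kcomp_stoch finite_states Phi_stoch M_stoch)

lemma PT_inv: "p \<in> pairsK K \<Longrightarrow> invariant_kernel S (PT p) \<mu>"
  unfolding Ptilde_def by (intro kcomp_invariant Phi_inv M_inv)

lemma M_pres:
  assumes p: "p \<in> pairsK K" and x: "(c, v) \<in> S" and nz: "M p (c, v) y \<noteq> 0"
  shows "Np p (fst y) = Np p c"
  using M_support[OF nz]
proof
  assume "y = (c, flipv p v)" then show ?thesis by simp
next
  assume "\<exists>j<n. c j = kmv p v \<and> y = (c(j := kpv p v), v)"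
  then obtain j where j: "j < n" "c j = kmv p v" "y = (c(j := kpv p v), v)" by auto
  have v: "v \<in> velos K" using x by (simp add: states_iff)
  have ne: "kmv p v \<noteq> kpv p v" using kmkp[OF p v] by simp
  note cu = cnt_upd[of j n c "kmv p v" "kpv p v", OF j(1,2) ne]
  have "{kmv p v, kpv p v} = {fst p, snd p}" using kmkp[OF p v] by auto
  then consider "kmv p v = fst p" "kpv p v = snd p" | "kmv p v = snd p" "kpv p v = fst p"
    using ne by (metis doubleton_eq_iff)
  then show ?thesis unfolding Np_def using cu j(3) by cases auto
qed

lemma Phi_pres: "Phi p x y \<noteq> 0 \<Longrightarrow> fst y = fst x"
  unfolding Phi_eq by (auto simp: Fs_def split: if_splits)

lemma PT_pres:
  assumes p: "p \<in> pairsK K" and x: "x \<in> S" and y: "y \<in> S" and nz: "PT p x y \<noteq> 0"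
  shows "Np p (fst x) = Np p (fst y)"
proof -
  from nz obtain w where w: "w \<in> S" "(\<Sum>z\<in>S. Phi p x z * M p z w) * Phi p w y \<noteq> 0"
    unfolding Ptilde_def kcomp_def by (meson sum.not_neutral_contains_not_neutral)
  then have "(\<Sum>z\<in>S. Phi p x z * M p z w) \<noteq> 0" by auto
  then obtain z where z: "z \<in> S" "Phi p x z * M p z w \<noteq> 0"
    by (meson sum.not_neutral_contains_not_neutral)
  obtain c v where zc: "z = (c, v)" by (cases z)
  have "fst z = fst x" using z Phi_pres[of p x z] by auto
  moreover have "Np p (fst w) = Np p c" using M_pres[OF p, of c v w] z zc by auto
  moreover have "fst y = fst w" using w Phi_pres[of p w y] by auto
  ultimately show ?thesis using zc by simp
qed

lemma kpow_PT_pres: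
  assumes p: "p \<in> pairsK K" and x: "x \<in> S" and y: "y \<in> S" and nz: "kpow S (PT p) t x y \<noteq> 0"
  shows "Np p (fst x) = Np p (fst y)"
  by (rule kpow_pres[OF finite_states _ x y nz]) (rule PT_pres[OF p])

end

declare kpow.simps(2)[simp del]

context nr begin

definition gq :: "nat \<Rightarrow> nat \<Rightarrow> real" where
  "gq N j = geom_pmf (s / real N) (Suc j)"

definition H :: "nat \<times> nat \<Rightarrow> nat \<Rightarrow> state \<Rightarrow> state \<Rightarrow> real" where
  "H p N x y = (if N = 0 then kpow S (PT p) 1 x y
     else (\<Sum>j. gq N j * kpow S (PT p) (Suc j) x y))"

definition w0 :: real where "w0 = 2 / (real K * (real K - 1))"

lemma Q_eq: "Q_NR \<pi> K n \<xi> s x y = (\<Sum>p\<in>pairsK K. w0 * H p (Np p (fst x)) x y)"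
  unfolding Q_NR_def H_def w0_def Np_def gq_def Let_def by simp

lemma q_bounds: "N \<noteq> 0 \<Longrightarrow> 0 < s / real N \<and> s / real N < 1"
  using s0 s1 by (auto simp: divide_simps)

lemma gq_eq: "gq N j = (1 - s / real N) ^ j * (s / real N)"
  unfolding gq_def geom_pmf_def by simp

lemma gq_pos: "N \<noteq> 0 \<Longrightarrow> gq N j > 0"
proof -
  assume N: "N \<noteq> 0"
  have a: "1 - s / real N > 0" "s / real N > 0" using q_bounds[OF N] by auto
  then have "(1 - s / real N) ^ j > 0" by simp
  then have "(1 - s / real N) ^ j * (s / real N) > 0" using a by (intro mult_pos_pos)
  then show ?thesis unfolding gq_eq .
qed

lemma gq_sums: "N \<noteq> 0 \<Longrightarrow> gq N sums 1"
proof -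
  assume N: "N \<noteq> 0"
  define q where "q = s / real N"
  have q: "0 < q" "q < 1" using q_bounds[OF N] q_def by auto
  have "(\<lambda>j. (1 - q) ^ j) sums (1 / (1 - (1 - q)))" by (rule geometric_sums) (use q in auto)
  then have "(\<lambda>j. (1 - q) ^ j * q) sums (1 / (1 - (1 - q)) * q)" by (rule sums_mult2)
  then show ?thesis unfolding gq_eq q_def[symmetric] using q by simp
qed

lemma w0_card: "w0 * real (card (pairsK K)) = 1"
proof -
  have "real (card (pairsK K) * 2) = real (K * (K - 1))" using card_pairsK[of K] by (simp only:)
  then have "real (card (pairsK K)) * 2 = real K * real (K - 1)" by simp
  moreover have "real (K - 1) = real K - 1" using K2 by simp
  ultimately have "real (card (pairsK K)) * 2 = real K * (real K - 1)" by simp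
  moreover have "real K * (real K - 1) > 0" using K2 by simp
  ultimately show ?thesis unfolding w0_def using K2 by (simp add: field_simps)
qed

lemma w0_pos: "w0 > 0" unfolding w0_def using K2 by simp

lemma w0_nn: "w0 \<ge> 0" using w0_pos by simp

lemma PT_nn: "p \<in> pairsK K \<Longrightarrow> \<forall>x\<in>S. \<forall>y\<in>S. PT p x y \<ge> 0"
  using PT_stoch unfolding stoch_def by blast

lemma H_summable:
  assumes p: "p \<in> pairsK K" and N: "N \<noteq> 0" and x: "x \<in> S" and y: "y \<in> S"
  shows "summable (\<lambda>j. gq N j * kpow S (PT p) (Suc j) x y)"
proof (rule summable_comparison_test)
  show "summable (gq N)" using gq_sums[OF N] by (rule sums_summable)
  show "\<exists>N0. \<forall>j\<ge>N0. norm (gq N j * kpow S (PT p) (Suc j) x y) \<le> gq N j"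
  proof (intro exI allI impI)
    fix j :: nat
    have "0 \<le> kpow S (PT p) (Suc j) x y" by (rule kpow_nonneg[OF PT_nn[OF p] x y])
    moreover have "kpow S (PT p) (Suc j) x y \<le> 1" by (rule kpow_le1[OF finite_states PT_stoch[OF p] x y])
    moreover have "gq N j > 0" using gq_pos[OF N] .
    ultimately show "norm (gq N j * kpow S (PT p) (Suc j) x y) \<le> gq N j"
      by (simp add: abs_mult mult_left_le)
  qed
qed

lemma H_nn:
  assumes p: "p \<in> pairsK K" and x: "x \<in> S" and y: "y \<in> S"
  shows "H p N x y \<ge> 0"
proof (cases "N = 0")
  case True then show ?thesis unfolding H_def using kpow_nonneg[OF PT_nn[OF p] x y] by simp
next
  case False
  then show ?thesis unfolding H_def
    using H_summable[OF p False x y] kpow_nonneg[OF PT_nn[OF p] x y] gq_pos[OF False]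
    by (auto intro!: suminf_nonneg mult_nonneg_nonneg simp: less_imp_le)
qed

lemma H_rowsum:
  assumes p: "p \<in> pairsK K" and x: "x \<in> S"
  shows "(\<Sum>y\<in>S. H p N x y) = 1"
proof (cases "N = 0")
  case True then show ?thesis unfolding H_def using kpow_rowsum[OF finite_states PT_stoch[OF p] x] by simp
next
  case False
  have "(\<Sum>y\<in>S. H p N x y) = (\<Sum>j. \<Sum>y\<in>S. gq N j * kpow S (PT p) (Suc j) x y)"
    unfolding H_def using False by (simp add: suminf_sum[symmetric] H_summable[OF p False x])
  also have "\<dots> = (\<Sum>j. gq N j)"
    by (simp add: sum_distrib_left[symmetric] kpow_rowsum[OF finite_states PT_stoch[OF p] x])
  also have "\<dots> = 1" using gq_sums[OF False] by (simp add: sums_iff)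
  finally show ?thesis .
qed

lemma H_inv:
  assumes p: "p \<in> pairsK K" and y: "y \<in> S"
  shows "(\<Sum>x\<in>S. \<mu> x * H p N x y) = \<mu> y"
proof (cases "N = 0")
  case True then show ?thesis unfolding H_def
    using kpow_invariant[OF PT_inv[OF p] y finite_states, of 1] by simp
next
  case False
  have "(\<Sum>x\<in>S. \<mu> x * H p N x y) = (\<Sum>x\<in>S. \<Sum>j. \<mu> x * (gq N j * kpow S (PT p) (Suc j) x y))"
    unfolding H_def using False by (simp add: suminf_mult H_summable[OF p False _ y])
  also have "\<dots> = (\<Sum>j. \<Sum>x\<in>S. \<mu> x * (gq N j * kpow S (PT p) (Suc j) x y))"
    by (rule suminf_sum[symmetric]) (auto intro!: summable_mult H_summable[OF p False _ y])
  also have "\<dots> = (\<Sum>j. gq N j * \<mu> y)"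
  proof -
    have "(\<Sum>x\<in>S. \<mu> x * (gq N j * kpow S (PT p) (Suc j) x y)) = gq N j * \<mu> y" for j
    proof -
      have "(\<Sum>x\<in>S. \<mu> x * (gq N j * kpow S (PT p) (Suc j) x y)) = gq N j * (\<Sum>x\<in>S. \<mu> x * kpow S (PT p) (Suc j) x y)"
        by (simp add: sum_distrib_left algebra_simps)
      then show ?thesis using kpow_invariant[OF PT_inv[OF p] y finite_states, of "Suc j"] by simp
    qed
    then show ?thesis by simp
  qed
  also have "\<dots> = \<mu> y" using gq_sums[OF False] by (simp add: sums_iff suminf_mult2[symmetric])
  finally show ?thesis .
qed

lemma H_shift:
  assumes p: "p \<in> pairsK K" and x: "x \<in> S" and y: "y \<in> S"
  shows "H p (Np p (fst x)) x y = H p (Np p (fst y)) x y"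
proof (cases "Np p (fst x) = Np p (fst y)")
  case False
  then have "kpow S (PT p) t x y = 0" for t using kpow_PT_pres[OF p x y] by blast
  then show ?thesis unfolding H_def by simp
qed simp

lemma H_pos:
  assumes p: "p \<in> pairsK K" and x: "x \<in> S" and y: "y \<in> S" and t: "t \<ge> 1" "kpow S (PT p) t x y > 0"
    and N0: "N = 0 \<Longrightarrow> t = 1"
  shows "H p N x y > 0"
proof (cases "N = 0")
  case True then show ?thesis unfolding H_def using N0 t by simp
next
  case False
  obtain j where tj: "t = Suc j" using t by (cases t) auto
  have "gq N j * kpow S (PT p) (Suc j) x y > 0" using gq_pos[OF False] t tj by simp
  also have "gq N j * kpow S (PT p) (Suc j) x y = (\<Sum>i\<in>{j}. gq N i * kpow S (PT p) (Suc i) x y)" by simp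
  also have "\<dots> \<le> (\<Sum>i. gq N i * kpow S (PT p) (Suc i) x y)"
    by (rule sum_le_suminf[OF H_summable[OF p False x y]])
      (use kpow_nonneg[OF PT_nn[OF p] x y] gq_pos[OF False] in \<open>auto intro!: mult_nonneg_nonneg simp: less_imp_le\<close>)
  finally show ?thesis unfolding H_def using False by simp
qed

abbreviation "Q \<equiv> Q_NR \<pi> K n \<xi> s"

lemma Q_nn: "x \<in> S \<Longrightarrow> y \<in> S \<Longrightarrow> Q x y \<ge> 0"
  unfolding Q_eq by (intro sum_nonneg mult_nonneg_nonneg w0_nn H_nn) auto

lemma Q_stoch: "stoch S Q"
  unfolding stoch_def
proof safe
  fix x y assume "x \<in> S" "y \<in> S" then show "Q x y \<ge> 0" by (rule Q_nn)
next
  fix x assume x: "x \<in> S"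
  have "(\<Sum>y\<in>S. Q x y) = (\<Sum>p\<in>pairsK K. w0 * (\<Sum>y\<in>S. H p (Np p (fst x)) x y))"
    unfolding Q_eq by (simp add: sum_distrib_left) (rule sum.swap)
  also have "\<dots> = (\<Sum>p\<in>pairsK K. w0)" using H_rowsum x by simp
  also have "\<dots> = 1" using w0_card by (simp add: mult.commute)
  finally show "(\<Sum>y\<in>S. Q x y) = 1" .
qed

lemma Q_inv: "invariant_kernel S Q \<mu>"
  unfolding invariant_kernel_def
proof
  fix y assume y: "y \<in> S"
  have "(\<Sum>x\<in>S. \<mu> x * Q x y) = (\<Sum>x\<in>S. \<Sum>p\<in>pairsK K. w0 * (\<mu> x * H p (Np p (fst y)) x y))"
    unfolding Q_eq
    by (intro sum.cong refl) (auto simp: sum_distrib_left H_shift[OF _ _ y] algebra_simps intro!: sum.cong)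
  also have "\<dots> = (\<Sum>p\<in>pairsK K. w0 * (\<Sum>x\<in>S. \<mu> x * H p (Np p (fst y)) x y))"
    by (subst sum.swap) (simp add: sum_distrib_left)
  also have "\<dots> = (\<Sum>p\<in>pairsK K. w0 * \<mu> y)" using H_inv y by simp
  also have "\<dots> = \<mu> y" using w0_card by (simp add: sum_distrib_right[symmetric] mult.commute[of _ w0])
  finally show "(\<Sum>x\<in>S. \<mu> x * Q x y) = \<mu> y" .
qed

lemma Q_pos:
  assumes p: "p \<in> pairsK K" and x: "x \<in> S" and y: "y \<in> S" and t: "t \<ge> 1" "kpow S (PT p) t x y > 0"
    and N0: "Np p (fst x) = 0 \<Longrightarrow> t = 1"
  shows "Q x y > 0"
proof -
  have "w0 * H p (Np p (fst x)) x y > 0" using H_pos[OF p x y t N0] w0_pos by simp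
  also have "w0 * H p (Np p (fst x)) x y \<le> (\<Sum>p\<in>pairsK K. w0 * H p (Np p (fst x)) x y)"
  proof (rule member_le_sum[OF p _ finite_pairsK])
    fix q assume "q \<in> pairsK K - {p}"
    then show "0 \<le> w0 * H q (Np q (fst x)) x y" by (intro mult_nonneg_nonneg w0_nn H_nn) (use x y in auto)
  qed
  finally show ?thesis unfolding Q_eq .
qed

end

declare kpow.simps(2)[simp del]

definition relab :: "config \<Rightarrow> nat set \<Rightarrow> nat \<Rightarrow> config" where
  "relab c A b = (\<lambda>i. if i \<in> A then b else c i)"

lemma relab_insert: "relab c (insert j A) b = (relab c A b)(j := b)"
  by (auto simp: relab_def fun_eq_iff)

lemma relab_configs: "c \<in> configs K n \<Longrightarrow> A \<subseteq> {..<n} \<Longrightarrow> b \<in> {1..K} \<Longrightarrow> relab c A b \<in> configs K n"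
  unfolding configs_def relab_def by (auto simp: PiE_def extensional_def Pi_def)

locale walk =
  fixes K n :: nat and p :: "nat \<times> nat" and P :: "state \<Rightarrow> state \<Rightarrow> real" and kmf kpf :: "velo \<Rightarrow> nat"
  assumes p: "p \<in> pairsK K"
    and kf1: "\<And>v. v \<in> velos K \<Longrightarrow> kmf (flipv p v) = kpf v"
    and kf2: "\<And>v. v \<in> velos K \<Longrightarrow> kpf (flipv p v) = kmf v"
    and kf3: "\<And>v. v \<in> velos K \<Longrightarrow> kmf v \<noteq> kpf v"
    and kf4: "\<And>v. v \<in> velos K \<Longrightarrow> kmf v \<in> {fst p, snd p}"
    and kf5: "\<And>v. v \<in> velos K \<Longrightarrow> kpf v \<in> {fst p, snd p}"
    and st1: "\<And>c v i. (c, v) \<in> states K n \<Longrightarrow> i < n \<Longrightarrow> c i = kmf v \<Longrightarrow> P (c, v) (c(i := kpf v), v) > 0"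
    and st2: "\<And>c v. (c, v) \<in> states K n \<Longrightarrow> cnt n c (kmf v) = 0 \<Longrightarrow> P (c, v) (c, flipv p v) > 0"
begin

abbreviation "R \<equiv> posrel (states K n) P"

lemma kf_range: "v \<in> velos K \<Longrightarrow> kmf v \<in> {1..K} \<and> kpf v \<in> {1..K}"
proof -
  assume v: "v \<in> velos K"
  have "kmf v \<in> {fst p, snd p}" "kpf v \<in> {fst p, snd p}" using kf4[OF v] kf5[OF v] .
  then show ?thesis using pairsK_mem[OF p] by auto
qed

lemma two_el: "x \<in> {a, b} \<Longrightarrow> y \<in> {a, b} \<Longrightarrow> z \<in> {a, b} \<Longrightarrow> x \<noteq> y \<Longrightarrow> z \<noteq> x \<Longrightarrow> z = y"
  by auto

lemma sweep:
  assumes x: "(c, v) \<in> states K n" and A: "A \<subseteq> {i. i < n \<and> c i = kmf v}"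
  shows "R\<^sup>*\<^sup>* (c, v) (relab c A (kpf v), v)"
proof -
  have cv: "c \<in> configs K n" "v \<in> velos K" using x by (auto simp: states_iff)
  have "finite A" by (rule finite_subset[OF A finite_idx])
  then show ?thesis using A
  proof (induction A rule: finite_induct)
    case empty
    have "relab c {} (kpf v) = c" by (simp add: relab_def)
    then show ?case by simp
  next
    case (insert j A)
    then have IH: "R\<^sup>*\<^sup>* (c, v) (relab c A (kpf v), v)" by auto
    have j: "j < n" "c j = kmf v" using insert by auto
    have A': "A \<subseteq> {..<n}" "insert j A \<subseteq> {..<n}" using insert by auto
    have in1: "(relab c A (kpf v), v) \<in> states K n"
      using relab_configs[OF cv(1) A'(1)] kf_range[OF cv(2)] cv by (auto simp: states_iff)
    have in2: "(relab c (insert j A) (kpf v), v) \<in> states K n"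
      using relab_configs[OF cv(1) A'(2)] kf_range[OF cv(2)] cv by (auto simp: states_iff)
    have "relab c A (kpf v) j = kmf v" using j insert(2) by (simp add: relab_def)
    then have "P (relab c A (kpf v), v) ((relab c A (kpf v))(j := kpf v), v) > 0"
      using st1[OF in1 j(1)] by simp
    then have "R (relab c A (kpf v), v) (relab c (insert j A) (kpf v), v)"
      unfolding posrel_def relab_insert using in1 in2 relab_insert by simp
    then show ?case using IH by (rule rtranclp.rtrancl_into_rtrancl[rotated])
  qed
qed

lemma half:
  assumes x: "(c, v) \<in> states K n"
  shows "R\<^sup>+\<^sup>+ (c, v) (c, flipv p v)"
proof -
  have cv: "c \<in> configs K n" "v \<in> velos K" using x by (auto simp: states_iff)
  define A where "A = {i. i < n \<and> c i = kmf v}"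
  define c1 where "c1 = relab c A (kpf v)"
  have k: "kmf (flipv p v) = kpf v" "kpf (flipv p v) = kmf v" "kmf v \<noteq> kpf v"
    using kf1[OF cv(2)] kf2[OF cv(2)] kf3[OF cv(2)] by auto
  have fv: "flipv p v \<in> velos K" using flipv_velos[OF p cv(2)] .
  have A': "A \<subseteq> {..<n}" unfolding A_def by auto
  have c1c: "c1 \<in> configs K n" unfolding c1_def using relab_configs[OF cv(1) A'] kf_range[OF cv(2)] by auto
  have s1: "R\<^sup>*\<^sup>* (c, v) (c1, v)" unfolding c1_def A_def by (rule sweep[OF x]) auto
  have "{i. i < n \<and> c1 i = kmf v} = {}" unfolding c1_def A_def relab_def using k by auto
  then have "cnt n c1 (kmf v) = 0" unfolding cnt_def by simp
  then have "P (c1, v) (c1, flipv p v) > 0" using st2[of c1 v] c1c cv by (auto simp: states_iff)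
  then have s2: "R (c1, v) (c1, flipv p v)" unfolding posrel_def using c1c cv fv by (auto simp: states_iff)
  have x2: "(c1, flipv p v) \<in> states K n" using c1c fv by (simp add: states_iff)
  have "R\<^sup>*\<^sup>* (c1, flipv p v) (relab c1 A (kpf (flipv p v)), flipv p v)"
    by (rule sweep[OF x2]) (auto simp: A_def c1_def relab_def k)
  moreover have "relab c1 A (kpf (flipv p v)) = c" unfolding c1_def relab_def A_def k by (auto simp: fun_eq_iff)
  ultimately have s3: "R\<^sup>*\<^sup>* (c1, flipv p v) (c, flipv p v)" by simp
  have "R\<^sup>+\<^sup>+ (c, v) (c1, flipv p v)" using s1 s2 by (rule rtranclp_into_tranclp1)
  then show ?thesis using s3 by (rule tranclp_rtranclp_tranclp)
qed

lemma loop: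
  assumes x: "(c, v) \<in> states K n"
  shows "R\<^sup>+\<^sup>+ (c, v) (c, v)"
proof -
  have x2: "(c, flipv p v) \<in> states K n" using x flipv_velos[OF p] by (auto simp: states_iff)
  show ?thesis using half[OF x] half[OF x2] by simp
qed

lemma relabel:
  assumes x: "(c, v) \<in> states K n" and i: "i < n" and ci: "c i \<in> {fst p, snd p}"
    and b: "b \<in> {fst p, snd p}" and bc: "b \<noteq> c i"
  shows "R\<^sup>+\<^sup>+ (c, v) (c(i := b), v)"
proof -
  have cv: "c \<in> configs K n" "v \<in> velos K" using x by (auto simp: states_iff)
  have k: "kmf (flipv p v) = kpf v" "kpf (flipv p v) = kmf v" "kmf v \<noteq> kpf v"
    using kf1[OF cv(2)] kf2[OF cv(2)] kf3[OF cv(2)] by auto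
  note k4 = kf4[OF cv(2)] and k5 = kf5[OF cv(2)]
  have fv: "flipv p v \<in> velos K" using flipv_velos[OF p cv(2)] .
  have bK: "b \<in> {1..K}" using b pairsK_mem[OF p] by auto
  have cb: "c(i := b) \<in> configs K n" using configs_upd[OF cv(1) i bK] .
  show ?thesis
  proof (cases "c i = kmf v")
    case True
    then have "b = kpf v" using two_el[OF k4 k5 b k(3)] bc by simp
    then have "P (c, v) (c(i := b), v) > 0" using st1[OF x i True] by simp
    then show ?thesis using x cb cv by (intro tranclp.r_into_trancl) (auto simp: posrel_def states_iff)
  next
    case False
    then have ci': "c i = kpf v" using two_el[OF k4 k5 ci k(3)] by simp
    then have bb: "b = kmf v" using two_el[OF k5 k4 b k(3)[symmetric]] bc by simp
    have x2: "(c, flipv p v) \<in> states K n" using cv fv by (simp add: states_iff)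
    have h1: "R\<^sup>+\<^sup>+ (c, v) (c, flipv p v)" by (rule half[OF x])
    have "P (c, flipv p v) (c(i := kpf (flipv p v)), flipv p v) > 0"
      using st1[OF x2 i] ci' k by simp
    then have h2: "R (c, flipv p v) (c(i := b), flipv p v)"
      using x2 cb fv bb k by (auto simp: posrel_def states_iff)
    have x3: "(c(i := b), flipv p v) \<in> states K n" using cb fv by (simp add: states_iff)
    have h3: "R\<^sup>+\<^sup>+ (c(i := b), flipv p v) (c(i := b), v)" using half[OF x3] by simp
    show ?thesis using h1 h2 h3 by (meson tranclp.trancl_into_trancl tranclp_trans)
  qed
qed

end


declare kpow.simps(2)[simp del]

context nr begin

lemma card_pairsK_real: "real (card (pairsK K)) * 2 = real K * (real K - 1)"
proof -
  have "real (card (pairsK K) * 2) = real (K * (K - 1))" using card_pairsK[of K] by (simp only:)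
  then have "real (card (pairsK K)) * 2 = real K * real (K - 1)" by simp
  moreover have "real (K - 1) = real K - 1" using K2 by simp
  ultimately show ?thesis by simp
qed

lemma mu_nn: "\<forall>x\<in>S. \<mu> x \<ge> 0"
  using pi_nn by (auto simp: pi_tilde_def states_def)

lemma mu_sum: "(\<Sum>x\<in>S. \<mu> x) = 1"
proof -
  define C where "C = (2::real) powr (- (real K * (real K - 1) / 2))"
  have "(\<Sum>x\<in>S. \<mu> x) = (\<Sum>c\<in>configs K n. \<Sum>v\<in>velos K. \<pi> c * C)"
    unfolding states_def by (subst sum.cartesian_product) (simp add: pi_tilde_def C_def case_prod_beta)
  also have "\<dots> = (\<Sum>c\<in>configs K n. \<pi> c * (C * real (card (velos K))))"
    by (simp add: algebra_simps)
  also have "\<dots> = (\<Sum>c\<in>configs K n. \<pi> c) * (C * real (card (velos K)))"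
    by (rule sum_distrib_right[symmetric])
  also have "\<dots> = C * 2 ^ card (pairsK K)" using pi_sum card_velos by simp
  also have "\<dots> = 1"
  proof -
    have e: "real K * (real K - 1) / 2 = real (card (pairsK K))" using card_pairsK_real by simp
    have "C * 2 ^ card (pairsK K) = 2 powr (- real (card (pairsK K))) * 2 powr real (card (pairsK K))"
      unfolding C_def e by (simp add: powr_realpow)
    also have "\<dots> = 1" by (simp add: powr_add[symmetric])
    finally show ?thesis .
  qed
  finally show ?thesis .
qed

lemma PT_lower:
  assumes p: "p \<in> pairsK K" and x: "x \<in> S" and y: "y \<in> S" and z: "z \<in> S" and w: "w \<in> S"
  shows "PT p x y \<ge> Phi p x z * M p z w * Phi p w y"
proof -
  have Phn: "\<forall>a\<in>S. \<forall>b\<in>S. Phi p a b \<ge> 0" using Phi_stoch[OF p] by (simp add: stoch_def)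
  have Mn: "\<forall>a\<in>S. \<forall>b\<in>S. M p a b \<ge> 0" using M_stoch[OF p] by (simp add: stoch_def)
  have inner: "(\<Sum>z'\<in>S. Phi p x z' * M p z' w') \<ge> 0" if "w' \<in> S" for w'
    using Phn Mn x that by (intro sum_nonneg mult_nonneg_nonneg) auto
  have "Phi p x z * M p z w \<le> (\<Sum>z'\<in>S. Phi p x z' * M p z' w)"
    by (rule member_le_sum[OF z _ finite_states]) (use Phn Mn x w in \<open>auto intro!: mult_nonneg_nonneg\<close>)
  then have "Phi p x z * M p z w * Phi p w y \<le> (\<Sum>z'\<in>S. Phi p x z' * M p z' w) * Phi p w y"
    using Phn w y by (intro mult_right_mono) auto
  also have "\<dots> \<le> (\<Sum>w'\<in>S. (\<Sum>z'\<in>S. Phi p x z' * M p z' w') * Phi p w' y)"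
    by (rule member_le_sum[OF w _ finite_states]) (use Phn inner y in \<open>auto intro!: mult_nonneg_nonneg\<close>)
  finally show ?thesis unfolding Ptilde_def kcomp_def .
qed

lemma Phi_self: "Phi p x x \<ge> 1 - ab"
  unfolding Phi_eq using ab_bounds by auto

lemma Phi_Fs: "Phi p x (Fs p x) \<ge> ab"
  unfolding Phi_eq using ab_bounds by auto

lemma M_rej1: "cnt n c (kmv p v) = 0 \<Longrightarrow> M p (c, v) (c, flipv p v) = 1"
  unfolding M_eq by simp

end

locale nrpos = nr +
  assumes pos: "\<forall>c\<in>configs K n. \<pi> c > 0"
begin

lemma M_acc_pos:
  assumes p: "p \<in> pairsK K" and x: "(c, v) \<in> S" and j: "j < n" "c j = kmv p v"
  shows "M p (c, v) (c(j := kpv p v), v) > 0"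
proof -
  have cv: "c \<in> configs K n" "v \<in> velos K" using x by (auto simp: states_iff)
  have kK: "kmv p v \<in> {1..K}" "kpv p v \<in> {1..K}" using kmkp[OF p cv(2)] by auto
  have N: "cnt n c (kmv p v) > 0" using cnt_pos[of j n c "kmv p v"] j by simp
  define Z where "Z = (\<Sum>l\<in>{1..K}. \<pi> (c(j := l)))"
  have cj: "c(j := kmv p v) = c" using j by auto
  have pc: "\<pi> c > 0" using pos cv by auto
  have pc': "\<pi> (c(j := kpv p v)) > 0" using pos configs_upd[OF cv(1) j(1) kK(2)] by auto
  have "Z \<ge> \<pi> c" using Z_props[OF cv(1) j(1) kK(1)] cj unfolding Z_def by simp
  then have Z: "Z > 0" using pc by simp
  have c1: "condp \<pi> K c j (kpv p v) > 0" unfolding condp_def Z_def[symmetric] using Z pc' by simp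
  have c2: "condp \<pi> K c j (kmv p v) > 0" unfolding condp_def Z_def[symmetric] cj using Z pc by simp
  have "ratio \<pi> K n c j (kmv p v) (kpv p v) > 0" unfolding ratio_def using N c1 c2
    by (intro mult_pos_pos divide_pos_pos) auto
  then have "alpha p c v j > 0" by simp
  then show ?thesis using M_acc[of p v j c, OF p cv(2) j] N by simp
qed

lemma walk_exists:
  assumes p: "p \<in> pairsK K"
  shows "\<exists>kmf kpf. walk K n p (PT p) kmf kpf"
proof (cases "ab < 1")
  case True
  have "walk K n p (PT p) (kmv p) (kpv p)"
  proof
    show "p \<in> pairsK K" by (rule p)
    fix v assume v: "v \<in> velos K"
    show "kmv p (flipv p v) = kpv p v" "kpv p (flipv p v) = kmv p v" "kmv p v \<noteq> kpv p v"
      "kmv p v \<in> {fst p, snd p}" "kpv p v \<in> {fst p, snd p}" using kmkp[OF p v] by auto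
  next
    fix c v i assume x: "(c, v) \<in> S" and i: "i < n" and ci: "c i = kmv p v"
    have cv: "c \<in> configs K n" "v \<in> velos K" using x by (auto simp: states_iff)
    have y: "(c(i := kpv p v), v) \<in> S" using configs_upd[OF cv(1) i] kmkp[OF p cv(2)] cv by (auto simp: states_iff)
    have a1: "Phi p (c, v) (c, v) > 0" using Phi_self[of p "(c, v)"] True by linarith
    have a2: "Phi p (c(i := kpv p v), v) (c(i := kpv p v), v) > 0"
      using Phi_self[of p "(c(i := kpv p v), v)"] True by linarith
    have "Phi p (c, v) (c, v) * M p (c, v) (c(i := kpv p v), v) * Phi p (c(i := kpv p v), v) (c(i := kpv p v), v) > 0"
      using a1 a2 M_acc_pos[OF p x i ci] by (intro mult_pos_pos)
    then show "PT p (c, v) (c(i := kpv p v), v) > 0" using PT_lower[OF p x y x y] by linarith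
  next
    fix c v assume x: "(c, v) \<in> S" and c0: "cnt n c (kmv p v) = 0"
    have y: "(c, flipv p v) \<in> S" using x flipv_velos[OF p] by (auto simp: states_iff)
    have a1: "Phi p (c, v) (c, v) > 0" using Phi_self[of p "(c, v)"] True by linarith
    have a2: "Phi p (c, flipv p v) (c, flipv p v) > 0"
      using Phi_self[of p "(c, flipv p v)"] True by linarith
    have "Phi p (c, v) (c, v) * M p (c, v) (c, flipv p v) * Phi p (c, flipv p v) (c, flipv p v) > 0"
      using a1 a2 M_rej1[OF c0] by (intro mult_pos_pos) auto
    then show "PT p (c, v) (c, flipv p v) > 0" using PT_lower[OF p x y x y] by linarith
  qed
  then show ?thesis by blast
next
  case False
  then have ab1: "ab > 0" using ab_bounds by linarith
  have "walk K n p (PT p) (kpv p) (kmv p)"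
  proof
    show "p \<in> pairsK K" by (rule p)
    fix v assume v: "v \<in> velos K"
    show "kpv p (flipv p v) = kmv p v" "kmv p (flipv p v) = kpv p v" "kpv p v \<noteq> kmv p v"
      "kpv p v \<in> {fst p, snd p}" "kmv p v \<in> {fst p, snd p}" using kmkp[OF p v] by auto
  next
    fix c v i assume x: "(c, v) \<in> S" and i: "i < n" and ci: "c i = kpv p v"
    have cv: "c \<in> configs K n" "v \<in> velos K" using x by (auto simp: states_iff)
    define fv where "fv = flipv p v"
    have fvv: "fv \<in> velos K" unfolding fv_def using flipv_velos[OF p cv(2)] .
    have kk: "kmv p fv = kpv p v" "kpv p fv = kmv p v" unfolding fv_def using kmkp[OF p cv(2)] by auto
    have z: "(c, fv) \<in> S" using cv fvv by (simp add: states_iff)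
    have cK: "c(i := kmv p v) \<in> configs K n" using configs_upd[OF cv(1) i] kmkp[OF p cv(2)] by auto
    have w: "(c(i := kmv p v), fv) \<in> S" using cK fvv by (simp add: states_iff)
    have y: "(c(i := kmv p v), v) \<in> S" using cK cv by (simp add: states_iff)
    have Mz: "M p (c, fv) (c(i := kmv p v), fv) > 0"
      using M_acc_pos[OF p z i] ci kk by simp
    have P1: "Phi p (c, v) (c, fv) \<ge> ab" using Phi_Fs[of p "(c, v)"] by (simp add: Fs_def fv_def)
    have P2: "Phi p (c(i := kmv p v), fv) (c(i := kmv p v), v) \<ge> ab"
      using Phi_Fs[of p "(c(i := kmv p v), fv)"] by (simp add: Fs_def fv_def)
    have "Phi p (c, v) (c, fv) * M p (c, fv) (c(i := kmv p v), fv) * Phi p (c(i := kmv p v), fv) (c(i := kmv p v), v) > 0"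
      using P1 P2 ab1 Mz by (intro mult_pos_pos) (auto intro: less_le_trans)
    then show "PT p (c, v) (c(i := kmv p v), v) > 0" using PT_lower[OF p x y z w] by linarith
  next
    fix c v assume x: "(c, v) \<in> S" and c0: "cnt n c (kpv p v) = 0"
    have cv: "c \<in> configs K n" "v \<in> velos K" using x by (auto simp: states_iff)
    define fv where "fv = flipv p v"
    have fvv: "fv \<in> velos K" unfolding fv_def using flipv_velos[OF p cv(2)] .
    have kk: "kmv p fv = kpv p v" unfolding fv_def using kmkp[OF p cv(2)] by auto
    have z: "(c, fv) \<in> S" using cv fvv by (simp add: states_iff)
    have Mz: "M p (c, fv) (c, v) = 1" using M_rej1[of c p fv] c0 kk by (simp add: fv_def)
    have P1: "Phi p (c, v) (c, fv) \<ge> ab" using Phi_Fs[of p "(c, v)"] by (simp add: Fs_def fv_def)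
    have "Phi p (c, v) (c, fv) * M p (c, fv) (c, v) * Phi p (c, v) (c, fv) > 0"
      using P1 ab1 Mz by (intro mult_pos_pos) (auto intro: less_le_trans)
    then show "PT p (c, v) (c, flipv p v) > 0" using PT_lower[OF p x z z x] by (simp add: fv_def)
  qed
  then show ?thesis by blast
qed

end

declare kpow.simps(2)[simp del]

context nrpos begin

abbreviation "RQ \<equiv> posrel S Q"

lemma Q_walk:
  assumes p: "p \<in> pairsK K" and x: "x \<in> S" and y: "y \<in> S"
    and tr: "(posrel S (PT p))\<^sup>+\<^sup>+ x y" and N: "Np p (fst x) \<noteq> 0"
  shows "Q x y > 0"
proof -
  have "\<exists>t\<ge>1. kpow S (PT p) t x y > 0 \<and> x \<in> S \<and> y \<in> S"
    by (rule tranclp_kpow[OF finite_states PT_nn[OF p] tr])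
  then obtain t where t: "t \<ge> 1" "kpow S (PT p) t x y > 0" by auto
  show ?thesis by (rule Q_pos[OF p x y t]) (use N in simp)
qed

lemma Q_step:
  assumes p: "p \<in> pairsK K" and x: "x \<in> S" and y: "y \<in> S" and P: "PT p x y > 0"
  shows "Q x y > 0"
  using Q_pos[OF p x y, of 1] P kpow_1[OF y finite_states, of "PT p" x] by simp

lemma Np_pos: "i < n \<Longrightarrow> c i \<in> {fst p, snd p} \<Longrightarrow> Np p c \<noteq> 0"
  unfolding Np_def using cnt_pos[of i n c] by auto

lemma Q_loop:
  assumes x: "(c, v) \<in> S"
  shows "Q (c, v) (c, v) > 0"
proof -
  have cv: "c \<in> configs K n" "v \<in> velos K" using x by (auto simp: states_iff)
  have n0: "0 < n" using n1 by simp
  have c0: "c 0 \<in> {1..K}" using configs_val[OF cv(1) n0] .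
  define p :: "nat \<times> nat" where "p = (if c 0 = 1 then (1, 2) else (1, c 0))"
  have p: "p \<in> pairsK K" using c0 K2 unfolding p_def pairsK_def by auto
  have cp: "c 0 \<in> {fst p, snd p}" unfolding p_def by auto
  obtain kmf kpf where "walk K n p (PT p) kmf kpf" using walk_exists[OF p] by blast
  then interpret w: walk K n p "PT p" kmf kpf .
  show ?thesis using Q_walk[OF p x x w.loop[OF x]] Np_pos[of 0 c p, OF n0 cp] by simp
qed

lemma Q_flip:
  assumes x: "(c, v) \<in> S" and p: "p \<in> pairsK K"
  shows "Q (c, v) (c, flipv p v) > 0"
proof -
  have cv: "c \<in> configs K n" "v \<in> velos K" using x by (auto simp: states_iff)
  have y: "(c, flipv p v) \<in> S" using cv flipv_velos[OF p] by (simp add: states_iff)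
  obtain kmf kpf where "walk K n p (PT p) kmf kpf" using walk_exists[OF p] by blast
  then interpret w: walk K n p "PT p" kmf kpf .
  show ?thesis
  proof (cases "Np p c = 0")
    case False
    then show ?thesis using Q_walk[OF p x y w.half[OF x]] by simp
  next
    case True
    then have "cnt n c (fst p) = 0" "cnt n c (snd p) = 0" unfolding Np_def by auto
    then have "cnt n c (kmf v) = 0" using w.kf4[OF cv(2)] by auto
    then have "PT p (c, v) (c, flipv p v) > 0" using w.st2[OF x] by simp
    then show ?thesis by (rule Q_step[OF p x y])
  qed
qed

lemma Q_relab:
  assumes x: "(c, v) \<in> S" and i: "i < n" and b: "b \<in> {1..K}" and bc: "b \<noteq> c i"
  shows "Q (c, v) (c(i := b), v) > 0"
proof -
  have cv: "c \<in> configs K n" "v \<in> velos K" using x by (auto simp: states_iff)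
  have ci: "c i \<in> {1..K}" using configs_val[OF cv(1) i] .
  define p where "p = (min (c i) b, max (c i) b)"
  have p: "p \<in> pairsK K" using ci b bc unfolding p_def pairsK_def by auto
  have cp: "c i \<in> {fst p, snd p}" "b \<in> {fst p, snd p}" unfolding p_def by auto
  have y: "(c(i := b), v) \<in> S" using configs_upd[OF cv(1) i b] cv by (simp add: states_iff)
  obtain kmf kpf where "walk K n p (PT p) kmf kpf" using walk_exists[OF p] by blast
  then interpret w: walk K n p "PT p" kmf kpf .
  show ?thesis using Q_walk[OF p x y w.relabel[OF x i cp bc]] Np_pos[of i c p, OF i cp(1)] by simp
qed

lemma RQ_flip: "(c, v) \<in> S \<Longrightarrow> p \<in> pairsK K \<Longrightarrow> RQ (c, v) (c, flipv p v)"
  using Q_flip by (auto simp: posrel_def states_iff flipv_velos)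

lemma vel_conn:
  assumes c: "c \<in> configs K n" and v': "v' \<in> velos K"
  shows "v \<in> velos K \<Longrightarrow> RQ\<^sup>*\<^sup>* (c, v) (c, v')"
proof (induction "card {q \<in> pairsK K. v q \<noteq> v' q}" arbitrary: v rule: less_induct)
  case less
  show ?case
  proof (cases "{q \<in> pairsK K. v q \<noteq> v' q} = {}")
    case True
    then have "v = v'" using less.prems v' unfolding velos_def
      by (intro PiE_ext[of _ "pairsK K" "\<lambda>_. {-1, 1}"]) auto
    then show ?thesis by simp
  next
    case False
    then obtain q where q: "q \<in> pairsK K" "v q \<noteq> v' q" by auto
    define v1 where "v1 = flipv q v"
    have v1: "v1 \<in> velos K" unfolding v1_def using flipv_velos[OF q(1) less.prems] .
    have "v1 q = v' q" using q velos_val[OF less.prems q(1)] velos_val[OF v' q(1)] unfolding v1_def by auto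
    then have eq: "{q' \<in> pairsK K. v1 q' \<noteq> v' q'} = {q' \<in> pairsK K. v q' \<noteq> v' q'} - {q}"
      unfolding v1_def flipv_def by auto
    have fin: "finite {q' \<in> pairsK K. v q' \<noteq> v' q'}" by (rule finite_subset[OF _ finite_pairsK]) auto
    have qA: "q \<in> {q' \<in> pairsK K. v q' \<noteq> v' q'}" using q by simp
    have "card {q' \<in> pairsK K. v1 q' \<noteq> v' q'} < card {q' \<in> pairsK K. v q' \<noteq> v' q'}"
      unfolding eq by (rule card_Diff1_less[OF fin qA])
    then have "RQ\<^sup>*\<^sup>* (c, v1) (c, v')" using less.hyps v1 by blast
    moreover have "RQ (c, v) (c, v1)" unfolding v1_def using RQ_flip q c less.prems by (simp add: states_iff)
    ultimately show ?thesis by (rule converse_rtranclp_into_rtranclp[rotated])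
  qed
qed

lemma cfg_conn:
  assumes c': "c' \<in> configs K n" and v: "v \<in> velos K"
  shows "c \<in> configs K n \<Longrightarrow> RQ\<^sup>*\<^sup>* (c, v) (c', v)"
proof (induction "card {i. i < n \<and> c i \<noteq> c' i}" arbitrary: c rule: less_induct)
  case less
  show ?case
  proof (cases "{i. i < n \<and> c i \<noteq> c' i} = {}")
    case True
    then have "c = c'" using less.prems c' unfolding configs_def
      by (intro PiE_ext[of _ "{0..<n}" "\<lambda>_. {1..K}"]) auto
    then show ?thesis by simp
  next
    case False
    then obtain i where i: "i < n" "c i \<noteq> c' i" by auto
    define c1 where "c1 = c(i := c' i)"
    have b: "c' i \<in> {1..K}" using configs_val[OF c' i(1)] .
    have c1: "c1 \<in> configs K n" unfolding c1_def using configs_upd[OF less.prems i(1) b] .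
    have eq: "{j. j < n \<and> c1 j \<noteq> c' j} = {j. j < n \<and> c j \<noteq> c' j} - {i}"
      unfolding c1_def by auto
    have iA: "i \<in> {j. j < n \<and> c j \<noteq> c' j}" using i by simp
    have "card {j. j < n \<and> c1 j \<noteq> c' j} < card {j. j < n \<and> c j \<noteq> c' j}"
      unfolding eq by (rule card_Diff1_less[OF finite_idx iA])
    then have "RQ\<^sup>*\<^sup>* (c1, v) (c', v)" using less.hyps c1 by blast
    moreover have "RQ (c, v) (c1, v)"
      using Q_relab[of c v i "c' i"] i b less.prems v c1 unfolding c1_def
      by (auto simp: posrel_def states_iff)
    ultimately show ?thesis by (rule converse_rtranclp_into_rtranclp[rotated])
  qed
qed

lemma conn: "x \<in> S \<Longrightarrow> y \<in> S \<Longrightarrow> RQ\<^sup>*\<^sup>* x y"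
proof -
  assume x: "x \<in> S" and y: "y \<in> S"
  obtain c v where xc: "x = (c, v)" by (cases x)
  obtain c' v' where yc: "y = (c', v')" by (cases y)
  have cv: "c \<in> configs K n" "v \<in> velos K" "c' \<in> configs K n" "v' \<in> velos K"
    using x y xc yc by (auto simp: states_iff)
  have "RQ\<^sup>*\<^sup>* (c, v) (c, v')" using vel_conn[OF cv(1) cv(4) cv(2)] .
  moreover have "RQ\<^sup>*\<^sup>* (c, v') (c', v')" using cfg_conn[OF cv(3) cv(4) cv(1)] .
  ultimately show ?thesis unfolding xc yc by simp
qed

lemma pos_results:
  "irreducible_kernel S Q \<and> aperiodic_kernel S Q \<and> uniformly_ergodic S Q \<mu>"
proof -
  have nn: "\<forall>x\<in>S. \<forall>y\<in>S. Q x y \<ge> 0" using Q_nn by blast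
  have lp: "\<forall>x\<in>S. Q x x > 0" using Q_loop by auto
  obtain m where m: "m \<ge> 1" "\<forall>x\<in>S. \<forall>y\<in>S. kpow S Q m x y > 0"
    using posm_generic[OF finite_states nn lp] conn by blast
  have "irreducible_kernel S Q \<and> aperiodic_kernel S Q"
    by (rule aperiodic_irred_generic[OF finite_states nn lp m])
  moreover have "uniformly_ergodic S Q \<mu>"
    by (rule ergodic_generic[OF finite_states Q_stoch mu_nn mu_sum Q_inv m])
  ultimately show ?thesis by simp
qed

end

theorem mainTheorem5:
  fixes \<pi> :: "config \<Rightarrow> real" and K n :: nat and \<xi> s :: real
  assumes "K \<ge> 2" and "n \<ge> 1"
    and "\<forall>c\<in>configs K n. \<pi> c \<ge> 0" and "(\<Sum>c\<in>configs K n. \<pi> c) = 1"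
    and "0 \<le> \<xi>" and "\<xi> \<le> real n" and "0 < s" and "s < 1"
  shows "invariant_kernel (states K n) (Q_NR \<pi> K n \<xi> s) (pi_tilde \<pi> K)
    \<and> ((\<forall>c\<in>configs K n. \<pi> c > 0) \<longrightarrow>
         irreducible_kernel (states K n) (Q_NR \<pi> K n \<xi> s)
       \<and> aperiodic_kernel (states K n) (Q_NR \<pi> K n \<xi> s)
       \<and> uniformly_ergodic (states K n) (Q_NR \<pi> K n \<xi> s) (pi_tilde \<pi> K))"
proof -
  interpret nr \<pi> K n \<xi> s using assms by unfold_locales auto
  have "invariant_kernel (states K n) (Q_NR \<pi> K n \<xi> s) (pi_tilde \<pi> K)" by (rule Q_inv)
  moreover have "(\<forall>c\<in>configs K n. \<pi> c > 0) \<longrightarrow>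
         irreducible_kernel (states K n) (Q_NR \<pi> K n \<xi> s)
       \<and> aperiodic_kernel (states K n) (Q_NR \<pi> K n \<xi> s)
       \<and> uniformly_ergodic (states K n) (Q_NR \<pi> K n \<xi> s) (pi_tilde \<pi> K)"
  proof
    assume pos: "\<forall>c\<in>configs K n. \<pi> c > 0"
    interpret nrpos \<pi> K n \<xi> s by unfold_locales (rule pos)
    show "irreducible_kernel (states K n) (Q_NR \<pi> K n \<xi> s)
       \<and> aperiodic_kernel (states K n) (Q_NR \<pi> K n \<xi> s)
       \<and> uniformly_ergodic (states K n) (Q_NR \<pi> K n \<xi> s) (pi_tilde \<pi> K)"
      by (rule pos_results)
  qed
  ultimately show ?thesis by blast
qed


end
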